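(* Let $\sigma(x,y)=(x\rightharpoonup y,x\leftharpoonup y)$ be an involutive non-degenerate quiver-theoretic Yang--Baxter map on a quiver $\mathscr{A}$ over $\Lambda$, and let $\mathscr{C}=\mathscr{C}(\sigma)$ be its structure category. Then $\mathscr{C}$ is left-Ore and any two elements of $\mathscr{C}$ with the same target admit a left-lcm. Consequently the canonical functor $\mathscr{C}\to\mathrm{Env}(\mathscr{C})$ is injective, and every element of $\mathscr{C}\mathscr{C}^{-1}\subseteq\mathrm{Env}(\mathscr{C})$ admits a symmetric normal decomposition (in the sense of Dehornoy et al., Foundations of Garside theory, Ch. III) with respect to the Garside structure of $\mathscr{C}$.
   Context: A quiver over $\Lambda$ has source/target maps $\mathfrak{s},\mathfrak{t}$; $\mathscr{A}\otimes\mathscr{A}$ is the quiver of composable pairs $x|y$ ($\mathfrak{t}(x)=\mathfrak{s}(y)$). A quiver-theoretic Yang--Baxter map is a source/target-preserving map $\sigma\colon\mathscr{A}\otimes\mathscr{A}\to\mathscr{A}\otimes\mathscr{A}$ satisfying the braid relation $(\sigma\otimes\mathrm{id})(\mathrm{id}\otimes\sigma)(\sigma\otimes\mathrm{id})=(\mathrm{id}\otimes\sigma)(\sigma\otimes\mathrm{id})(\mathrm{id}\otimes\sigma)$; involutive means $\sigma^2=\mathrm{id}$; non-degenerate means all maps $x\rightharpoonup\cdot\colon\mathscr{A}(\mathfrak{t}(x),\Lambda)\to\mathscr{A}(\mathfrak{s}(x),\Lambda)$ and $\cdot\leftharpoonup y\colon\mathscr{A}(\Lambda,\mathfrak{s}(y))\to\mathscr{A}(\Lambda,\mathfrak{t}(y))$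 are bijective. $\mathscr{C}(\sigma)$ is the category presented by generators $\mathscr{A}$ and relations $x|y\sim(x\rightharpoonup y)|(x\leftharpoonup y)$. A category is left-Ore if it is (left- and right-) cancellative and any two elements with the same target have a common left-multiple $ux=vy$. A left-lcm of $x,y$ is a common left-multiple right-dividing every common left-multiple. $\mathrm{Env}(\mathscr{C})$ is the enveloping groupoid: the groupoid with a functor $\iota\colon\mathscr{C}\to\mathrm{Env}(\mathscr{C})$ through which every functor from $\mathscr{C}$ to a groupoid factors uniquely. *)

theory Defs
  imports Main
begin

text \<open>Composition convention of Dehornoy et al.: cmp f g is "f then g", defined when
  tgt f = src g.\<close>

record ('o, 'm) category =
  ob  :: "'o set"
  mor :: "'m set"
  src :: "'m \<Rightarrow> 'o"
  tgt :: "'m \<Rightarrow> 'o"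
  cmp :: "'m \<Rightarrow> 'm \<Rightarrow> 'm"
  idm :: "'o \<Rightarrow> 'm"

definition left_divides :: "('o,'m) category \<Rightarrow> 'm \<Rightarrow> 'm \<Rightarrow> bool" where
  "left_divides C f g \<longleftrightarrow> f \<in> mor C \<and> g \<in> mor C \<and>
     (\<exists>h\<in>mor C. src C h = tgt C f \<and> cmp C f h = g)"

definition right_divides :: "('o,'m) category \<Rightarrow> 'm \<Rightarrow> 'm \<Rightarrow> bool" where
  "right_divides C f g \<longleftrightarrow> f \<in> mor C \<and> g \<in> mor C \<and>
     (\<exists>u\<in>mor C. tgt C u = src C f \<and> cmp C u f = g)"

definition left_cancellative :: "('o,'m) category \<Rightarrow> bool" where
  "left_cancellative C \<longleftrightarrow> (\<forall>f\<in>mor C. \<forall>g\<in>mor C. \<forall>g'\<in>mor C.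
     src C g = tgt C f \<longrightarrow> src C g' = tgt C f \<longrightarrow> cmp C f g = cmp C f g' \<longrightarrow> g = g')"

definition right_cancellative :: "('o,'m) category \<Rightarrow> bool" where
  "right_cancellative C \<longleftrightarrow> (\<forall>f\<in>mor C. \<forall>f'\<in>mor C. \<forall>g\<in>mor C.
     tgt C f = src C g \<longrightarrow> tgt C f' = src C g \<longrightarrow> cmp C f g = cmp C f' g \<longrightarrow> f = f')"

definition left_ore :: "('o,'m) category \<Rightarrow> bool" where
  "left_ore C \<longleftrightarrow> left_cancellative C \<and> right_cancellative C \<and>
     (\<forall>x\<in>mor C. \<forall>y\<in>mor C. tgt C x = tgt C y \<longrightarrow>
        (\<exists>u\<in>mor C. \<exists>v\<in>mor C. tgt C u = src C x \<and> tgt C v = src C y \<and>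
            cmp C u x = cmp C v y))"

definition is_left_lcm :: "('o,'m) category \<Rightarrow> 'm \<Rightarrow> 'm \<Rightarrow> 'm \<Rightarrow> bool" where
  "is_left_lcm C f g h \<longleftrightarrow> right_divides C f h \<and> right_divides C g h \<and>
     (\<forall>h'\<in>mor C. right_divides C f h' \<longrightarrow> right_divides C g h' \<longrightarrow> right_divides C h h')"

definition invertible :: "('o,'m) category \<Rightarrow> 'm \<Rightarrow> bool" where
  "invertible C f \<longleftrightarrow> f \<in> mor C \<and> (\<exists>g\<in>mor C. src C g = tgt C f \<and> tgt C g = src C f \<and>
      cmp C f g = idm C (src C f) \<and> cmp C g f = idm C (tgt C f))"

definition sharp :: "('o,'m) category \<Rightarrow> 'm set \<Rightarrow> 'm set" where
  "sharp C S = {cmp C s e | s e. s \<in> S \<and> invertible C e \<and> tgt C s = src C e}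
              \<union> {e. invertible C e}"

definition greedy :: "('o,'m) category \<Rightarrow> 'm set \<Rightarrow> 'm \<Rightarrow> 'm \<Rightarrow> bool" where
  "greedy C S g1 g2 \<longleftrightarrow> (\<forall>s\<in>S. \<forall>f\<in>mor C. tgt C f = src C g1 \<longrightarrow>
       left_divides C s (cmp C f (cmp C g1 g2)) \<longrightarrow> left_divides C s (cmp C f g1))"

fun composable_list :: "('o,'m) category \<Rightarrow> 'm list \<Rightarrow> bool" where
  "composable_list C [] = True"
| "composable_list C [f] = (f \<in> mor C)"
| "composable_list C (f # g # xs) =
     (f \<in> mor C \<and> tgt C f = src C g \<and> composable_list C (g # xs))"

fun greedy_list :: "('o,'m) category \<Rightarrow> 'm set \<Rightarrow> 'm list \<Rightarrow> bool" where
  "greedy_list C S [] = True"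
| "greedy_list C S [f] = True"
| "greedy_list C S (f # g # xs) = (greedy C S f g \<and> greedy_list C S (g # xs))"

fun prod_list_cat :: "('o,'m) category \<Rightarrow> 'm list \<Rightarrow> 'm" where
  "prod_list_cat C [] = undefined"
| "prod_list_cat C [f] = f"
| "prod_list_cat C (f # g # xs) = cmp C f (prod_list_cat C (g # xs))"

definition normal_path :: "('o,'m) category \<Rightarrow> 'm set \<Rightarrow> 'm list \<Rightarrow> bool" where
  "normal_path C S xs \<longleftrightarrow> xs \<noteq> [] \<and> set xs \<subseteq> sharp C S \<and> composable_list C xs
     \<and> greedy_list C S xs"

definition garside_family :: "('o,'m) category \<Rightarrow> 'm set \<Rightarrow> bool" where
  "garside_family C S \<longleftrightarrow> S \<subseteq> mor C \<and>
     (\<forall>g\<in>mor C. \<exists>xs. normal_path C S xs \<and> prod_list_cat C xs = g)"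

definition left_disjoint :: "('o,'m) category \<Rightarrow> 'm \<Rightarrow> 'm \<Rightarrow> bool" where
  "left_disjoint C f g \<longleftrightarrow> f \<in> mor C \<and> g \<in> mor C \<and> src C f = src C g \<and>
     (\<forall>h\<in>mor C. \<forall>h'\<in>mor C. tgt C h' = src C f \<longrightarrow>
        left_divides C h (cmp C h' f) \<longrightarrow> left_divides C h (cmp C h' g) \<longrightarrow>
        left_divides C h h')"

text \<open>Env(C) is presented by generators C \<union> C-bar (letter (f,True) = f, (f,False) = f^{-1})
  and relations f|g = fg, f|f^{-1} = 1, f^{-1}|f = 1, 1_x = empty word.
  An element is the class of a pair (x, w) of a starting object and a valid word.\<close>

definition letter_src :: "('o,'m) category \<Rightarrow> 'm \<times> bool \<Rightarrow> 'o" where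
  "letter_src C l = (if snd l then src C (fst l) else tgt C (fst l))"

definition letter_tgt :: "('o,'m) category \<Rightarrow> 'm \<times> bool \<Rightarrow> 'o" where
  "letter_tgt C l = (if snd l then tgt C (fst l) else src C (fst l))"

fun env_walk :: "('o,'m) category \<Rightarrow> 'o \<Rightarrow> ('m \<times> bool) list \<Rightarrow> bool" where
  "env_walk C x [] = (x \<in> ob C)"
| "env_walk C x (l # w) = (fst l \<in> mor C \<and> letter_src C l = x \<and> env_walk C (letter_tgt C l) w)"

inductive env_step :: "('o,'m) category \<Rightarrow> 'o \<times> ('m \<times> bool) list \<Rightarrow> 'o \<times> ('m \<times> bool) list \<Rightarrow> bool"
  for C where
  comp: "env_walk C x (u @ [(f,True),(g,True)] @ v) \<Longrightarrow> env_walk C x (u @ [(cmp C f g,True)] @ v)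
     \<Longrightarrow> env_step C (x, u @ [(f,True),(g,True)] @ v) (x, u @ [(cmp C f g,True)] @ v)"
| inv1: "env_walk C x (u @ [(f,True),(f,False)] @ v) \<Longrightarrow> env_walk C x (u @ v)
     \<Longrightarrow> env_step C (x, u @ [(f,True),(f,False)] @ v) (x, u @ v)"
| inv2: "env_walk C x (u @ [(f,False),(f,True)] @ v) \<Longrightarrow> env_walk C x (u @ v)
     \<Longrightarrow> env_step C (x, u @ [(f,False),(f,True)] @ v) (x, u @ v)"
| ident: "env_walk C x (u @ [(idm C y,True)] @ v) \<Longrightarrow> env_walk C x (u @ v)
     \<Longrightarrow> env_step C (x, u @ [(idm C y,True)] @ v) (x, u @ v)"

definition env_eq :: "('o,'m) category \<Rightarrow> 'o \<times> ('m \<times> bool) list \<Rightarrow> 'o \<times> ('m \<times> bool) list \<Rightarrow> bool" where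
  "env_eq C = (\<lambda>p q. env_step C p q \<or> env_step C q p)\<^sup>*\<^sup>*"

definition env_class :: "('o,'m) category \<Rightarrow> 'o \<times> ('m \<times> bool) list \<Rightarrow> ('o \<times> ('m \<times> bool) list) set" where
  "env_class C p = {q. env_eq C p q}"

definition env_iota :: "('o,'m) category \<Rightarrow> 'm \<Rightarrow> ('o \<times> ('m \<times> bool) list) set" where
  "env_iota C f = env_class C (src C f, [(f,True)])"

text \<open>gamma admits a symmetric S-normal decomposition t_q|..|t_1 | s_1|..|s_p:
  t_1|..|t_q and s_1|..|s_p S-normal, t_1 and s_1 left-disjoint, and
  gamma = t_q^{-1} .. t_1^{-1} s_1 .. s_p.  (Empty sides are represented by padding with
  an identity, which is always possible.)\<close>
definition has_sym_normal_decomp ::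
  "('o,'m) category \<Rightarrow> 'm set \<Rightarrow> ('o \<times> ('m \<times> bool) list) set \<Rightarrow> bool" where
  "has_sym_normal_decomp C S \<gamma> \<longleftrightarrow> (\<exists>ts ss. normal_path C S ts \<and> normal_path C S ss \<and>
      left_disjoint C (hd ts) (hd ss) \<and>
      \<gamma> = env_class C (tgt C (last ts), map (\<lambda>t. (t, False)) (rev ts) @ map (\<lambda>s. (s, True)) ss))"

definition is_quiver :: "'v set \<Rightarrow> 'a set \<Rightarrow> ('a \<Rightarrow> 'v) \<Rightarrow> ('a \<Rightarrow> 'v) \<Rightarrow> bool" where
  "is_quiver Lam A s t \<longleftrightarrow> (\<forall>x\<in>A. s x \<in> Lam \<and> t x \<in> Lam)"

definition composable :: "'a set \<Rightarrow> ('a \<Rightarrow> 'v) \<Rightarrow> ('a \<Rightarrow> 'v) \<Rightarrow> 'a \<Rightarrow> 'a \<Rightarrow> bool" where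
  "composable A s t x y \<longleftrightarrow> x \<in> A \<and> y \<in> A \<and> t x = s y"

definition lact :: "('a \<times> 'a \<Rightarrow> 'a \<times> 'a) \<Rightarrow> 'a \<Rightarrow> 'a \<Rightarrow> 'a" where
  "lact \<sigma> x y = fst (\<sigma> (x, y))"

definition ract :: "('a \<times> 'a \<Rightarrow> 'a \<times> 'a) \<Rightarrow> 'a \<Rightarrow> 'a \<Rightarrow> 'a" where
  "ract \<sigma> x y = snd (\<sigma> (x, y))"

definition quiver_map :: "'a set \<Rightarrow> ('a \<Rightarrow> 'v) \<Rightarrow> ('a \<Rightarrow> 'v) \<Rightarrow> ('a \<times> 'a \<Rightarrow> 'a \<times> 'a) \<Rightarrow> bool" where
  "quiver_map A s t \<sigma> \<longleftrightarrow> (\<forall>x y. composable A s t x y \<longrightarrow>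
      composable A s t (lact \<sigma> x y) (ract \<sigma> x y) \<and>
      s (lact \<sigma> x y) = s x \<and> t (ract \<sigma> x y) = t y)"

definition sigma12 :: "('a \<times> 'a \<Rightarrow> 'a \<times> 'a) \<Rightarrow> 'a \<times> 'a \<times> 'a \<Rightarrow> 'a \<times> 'a \<times> 'a" where
  "sigma12 \<sigma> T = (case T of (x, y, z) \<Rightarrow> (fst (\<sigma> (x, y)), snd (\<sigma> (x, y)), z))"

definition sigma23 :: "('a \<times> 'a \<Rightarrow> 'a \<times> 'a) \<Rightarrow> 'a \<times> 'a \<times> 'a \<Rightarrow> 'a \<times> 'a \<times> 'a" where
  "sigma23 \<sigma> T = (case T of (x, y, z) \<Rightarrow> (x, fst (\<sigma> (y, z)), snd (\<sigma> (y, z))))"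

definition yang_baxter_map :: "'v set \<Rightarrow> 'a set \<Rightarrow> ('a \<Rightarrow> 'v) \<Rightarrow> ('a \<Rightarrow> 'v) \<Rightarrow> ('a \<times> 'a \<Rightarrow> 'a \<times> 'a) \<Rightarrow> bool" where
  "yang_baxter_map Lam A s t \<sigma> \<longleftrightarrow> is_quiver Lam A s t \<and> quiver_map A s t \<sigma> \<and>
     (\<forall>x y z. composable A s t x y \<longrightarrow> composable A s t y z \<longrightarrow>
        sigma12 \<sigma> (sigma23 \<sigma> (sigma12 \<sigma> (x, y, z))) = sigma23 \<sigma> (sigma12 \<sigma> (sigma23 \<sigma> (x, y, z))))"

definition involutive_qmap :: "'a set \<Rightarrow> ('a \<Rightarrow> 'v) \<Rightarrow> ('a \<Rightarrow> 'v) \<Rightarrow> ('a \<times> 'a \<Rightarrow> 'a \<times> 'a) \<Rightarrow> bool" where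
  "involutive_qmap A s t \<sigma> \<longleftrightarrow> (\<forall>x y. composable A s t x y \<longrightarrow> \<sigma> (\<sigma> (x, y)) = (x, y))"

definition nondegenerate :: "'a set \<Rightarrow> ('a \<Rightarrow> 'v) \<Rightarrow> ('a \<Rightarrow> 'v) \<Rightarrow> ('a \<times> 'a \<Rightarrow> 'a \<times> 'a) \<Rightarrow> bool" where
  "nondegenerate A s t \<sigma> \<longleftrightarrow>
     (\<forall>x\<in>A. bij_betw (\<lambda>y. lact \<sigma> x y) {y\<in>A. s y = t x} {y\<in>A. s y = s x}) \<and>
     (\<forall>y\<in>A. bij_betw (\<lambda>x. ract \<sigma> x y) {x\<in>A. t x = s y} {x\<in>A. t x = t y})"

text \<open>Paths of the free category: a starting vertex together with a list of consecutive arrows.\<close>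
fun arrow_path :: "'a set \<Rightarrow> ('a \<Rightarrow> 'v) \<Rightarrow> ('a \<Rightarrow> 'v) \<Rightarrow> 'a list \<Rightarrow> bool" where
  "arrow_path A s t [] = True"
| "arrow_path A s t [x] = (x \<in> A)"
| "arrow_path A s t (x # y # xs) = (composable A s t x y \<and> arrow_path A s t (y # xs))"

definition valid_path :: "'v set \<Rightarrow> 'a set \<Rightarrow> ('a \<Rightarrow> 'v) \<Rightarrow> ('a \<Rightarrow> 'v) \<Rightarrow> 'v \<times> 'a list \<Rightarrow> bool" where
  "valid_path Lam A s t p \<longleftrightarrow> fst p \<in> Lam \<and> arrow_path A s t (snd p) \<and>
     (snd p \<noteq> [] \<longrightarrow> s (hd (snd p)) = fst p)"

definition path_tgt :: "('a \<Rightarrow> 'v) \<Rightarrow> 'v \<times> 'a list \<Rightarrow> 'v" where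
  "path_tgt t p = (if snd p = [] then fst p else t (last (snd p)))"

inductive sc_step :: "'v set \<Rightarrow> 'a set \<Rightarrow> ('a \<Rightarrow> 'v) \<Rightarrow> ('a \<Rightarrow> 'v) \<Rightarrow> ('a \<times> 'a \<Rightarrow> 'a \<times> 'a)
    \<Rightarrow> 'v \<times> 'a list \<Rightarrow> 'v \<times> 'a list \<Rightarrow> bool"
  for Lam A s t \<sigma> where
  "valid_path Lam A s t (v, us @ [x, y] @ ws) \<Longrightarrow>
   sc_step Lam A s t \<sigma> (v, us @ [x, y] @ ws) (v, us @ [lact \<sigma> x y, ract \<sigma> x y] @ ws)"

definition sc_eq :: "'v set \<Rightarrow> 'a set \<Rightarrow> ('a \<Rightarrow> 'v) \<Rightarrow> ('a \<Rightarrow> 'v) \<Rightarrow> ('a \<times> 'a \<Rightarrow> 'a \<times> 'a)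
    \<Rightarrow> 'v \<times> 'a list \<Rightarrow> 'v \<times> 'a list \<Rightarrow> bool" where
  "sc_eq Lam A s t \<sigma> = (\<lambda>p q. sc_step Lam A s t \<sigma> p q \<or> sc_step Lam A s t \<sigma> q p)\<^sup>*\<^sup>*"

definition sc_class :: "'v set \<Rightarrow> 'a set \<Rightarrow> ('a \<Rightarrow> 'v) \<Rightarrow> ('a \<Rightarrow> 'v) \<Rightarrow> ('a \<times> 'a \<Rightarrow> 'a \<times> 'a)
    \<Rightarrow> 'v \<times> 'a list \<Rightarrow> ('v \<times> 'a list) set" where
  "sc_class Lam A s t \<sigma> p = {q. sc_eq Lam A s t \<sigma> p q}"

definition structure_category :: "'v set \<Rightarrow> 'a set \<Rightarrow> ('a \<Rightarrow> 'v) \<Rightarrow> ('a \<Rightarrow> 'v)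
    \<Rightarrow> ('a \<times> 'a \<Rightarrow> 'a \<times> 'a) \<Rightarrow> ('v, ('v \<times> 'a list) set) category" where
  "structure_category Lam A s t \<sigma> =
     \<lparr> ob = Lam,
       mor = sc_class Lam A s t \<sigma> ` {p. valid_path Lam A s t p},
       src = (\<lambda>M. fst (SOME p. p \<in> M)),
       tgt = (\<lambda>M. path_tgt t (SOME p. p \<in> M)),
       cmp = (\<lambda>M N. sc_class Lam A s t \<sigma>
                (fst (SOME p. p \<in> M), snd (SOME p. p \<in> M) @ snd (SOME q. q \<in> N))),
       idm = (\<lambda>v. sc_class Lam A s t \<sigma> (v, [])) \<rparr>"

end

theory Submission
  imports Defs "HOL-Library.Multiset"
begin

lemma arrow_path_hd: "arrow_path A s t (a # l) \<Longrightarrow> a \<in> A"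
  by (cases l) (auto simp: composable_def)

lemma arrow_path_Cons: "arrow_path A s t (x # w) \<longleftrightarrow> x \<in> A \<and> arrow_path A s t w \<and> (w \<noteq> [] \<longrightarrow> t x = s (hd w))"
  by (cases w) (auto simp: composable_def dest: arrow_path_hd)

lemma arrow_path_append: "arrow_path A s t (u @ v) \<longleftrightarrow> arrow_path A s t u \<and> arrow_path A s t v \<and> (u \<noteq> [] \<longrightarrow> v \<noteq> [] \<longrightarrow> t (last u) = s (hd v))"
  by (induction u) (auto simp: arrow_path_Cons)

lemma arrow_path_rev: "arrow_path A t s (rev w) \<longleftrightarrow> arrow_path A s t w"
  by (induction w) (auto simp: arrow_path_append arrow_path_Cons hd_rev last_rev)

definition Aset :: "'a set \<Rightarrow> ('a \<Rightarrow> 'v) \<Rightarrow> 'v \<Rightarrow> 'a set" where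
  "Aset A s v = {b \<in> A. s b = v}"

lemma image_mset_inv_cancel:
  assumes "inj_on f X" "set_mset M \<subseteq> X"
  shows "image_mset (inv_into X f) (image_mset f M) = M"
proof -
  have "image_mset (inv_into X f) (image_mset f M) = image_mset (inv_into X f \<circ> f) M"
    by (simp add: multiset.map_comp)
  also have "\<dots> = image_mset id M"
    by (rule image_mset_cong) (use assms in \<open>auto simp: inv_into_f_f\<close>)
  finally show ?thesis by simp
qed

lemma image_mset_inj_eq:
  assumes "inj_on f X" "set_mset M \<subseteq> X" "set_mset N \<subseteq> X" "image_mset f M = image_mset f N"
  shows "M = N"
  by (metis assms image_mset_inv_cancel)

lemma image_mset_inj_sub:
  assumes "inj_on f X" "set_mset M \<subseteq> X" "set_mset N \<subseteq> X" "image_mset f M \<subseteq># image_mset f N"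
  shows "M \<subseteq># N"
  by (metis assms image_mset_inv_cancel image_mset_subseteq_mono)

lemma count_image_mset_inj_on:
  assumes "inj_on f X" "set_mset M \<subseteq> X" "b \<in> X"
  shows "count (image_mset f M) (f b) = count M b"
proof -
  have "f -` {f b} \<inter> set_mset M = (if b \<in># M then {b} else {})"
    using assms by (auto dest: inj_onD)
  then show ?thesis by (simp add: count_image_mset not_in_iff)
qed

lemma rtranclp_sym:
  assumes "\<And>x y. r x y \<Longrightarrow> r y x" "r\<^sup>*\<^sup>* a b" shows "r\<^sup>*\<^sup>* b a"
  using assms(2) by induction (auto intro: converse_rtranclp_into_rtranclp assms(1))

locale qyb =
  fixes A :: "'a set" and s t :: "'a \<Rightarrow> 'v" and L R :: "'a \<Rightarrow> 'a \<Rightarrow> 'a"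
  assumes LR: "\<lbrakk>x \<in> A; y \<in> A; t x = s y\<rbrakk> \<Longrightarrow> L x y \<in> A \<and> R x y \<in> A \<and> t (L x y) = s (R x y) \<and> s (L x y) = s x \<and> t (R x y) = t y"
  and invol: "\<lbrakk>x \<in> A; y \<in> A; t x = s y\<rbrakk> \<Longrightarrow> L (L x y) (R x y) = x \<and> R (L x y) (R x y) = y"
  and nd: "x \<in> A \<Longrightarrow> bij_betw (L x) (Aset A s (t x)) (Aset A s (s x))"
  and braid: "\<lbrakk>x \<in> A; y \<in> A; z \<in> A; t x = s y; t y = s z\<rbrakk> \<Longrightarrow> L x (L y z) = L (L x y) (L (R x y) z)"
begin

abbreviation "ap \<equiv> arrow_path A s t"

definition vp :: "'v \<Rightarrow> 'a list \<Rightarrow> bool" where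
  "vp v w \<longleftrightarrow> ap w \<and> (w \<noteq> [] \<longrightarrow> s (hd w) = v)"

definition pt :: "'v \<Rightarrow> 'a list \<Rightarrow> 'v" where
  "pt v w = (if w = [] then v else t (last w))"

definition step :: "'a list \<Rightarrow> 'a list \<Rightarrow> bool" where
  "step w w' \<longleftrightarrow> ap w \<and> (\<exists>us x y ws. w = us @ [x, y] @ ws \<and> w' = us @ [L x y, R x y] @ ws)"

abbreviation E where "E \<equiv> step\<^sup>*\<^sup>*"

fun lam :: "'a list \<Rightarrow> 'a \<Rightarrow> 'a" where
  "lam [] = id" | "lam (x # w) = L x \<circ> lam w"

fun phi :: "'a list \<Rightarrow> 'a multiset" where
  "phi [] = {#}" | "phi (x # w) = add_mset x (image_mset (L x) (phi w))"

lemma vp_Nil[simp]: "vp v []" by (simp add: vp_def)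
lemma pt_Nil[simp]: "pt v [] = v" by (simp add: pt_def)

lemma vp_Cons: "vp v (x # w) \<longleftrightarrow> x \<in> A \<and> s x = v \<and> vp (t x) w"
  by (auto simp: vp_def arrow_path_Cons)

lemma pt_Cons[simp]: "pt v (x # w) = pt (t x) w"
  by (simp add: pt_def)

lemma vp_append: "vp v (p @ u) \<longleftrightarrow> vp v p \<and> vp (pt v p) u"
  by (induction p arbitrary: v) (auto simp: vp_Cons)

lemma pt_append: "pt v (p @ u) = pt (pt v p) u"
  by (induction p arbitrary: v) auto

lemma vp_unique: "vp a w \<Longrightarrow> vp b w \<Longrightarrow> pt a w = pt b w \<Longrightarrow> a = b"
  by (cases w) (auto simp: vp_def)

lemma phi_append: "phi (u @ v) = phi u + image_mset (lam u) (phi v)"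
  by (induction u) (auto simp: multiset.map_comp comp_def)

lemma lam_append: "lam (u @ v) = lam u \<circ> lam v"
  by (induction u) auto

lemma size_phi[simp]: "size (phi w) = length w"
  by (induction w) auto

lemma lam_bij: "vp v w \<Longrightarrow> bij_betw (lam w) (Aset A s (pt v w)) (Aset A s v)"
proof (induction w arbitrary: v)
  case Nil then show ?case by (simp add: bij_betw_def)
next
  case (Cons x w)
  then have "x \<in> A" "s x = v" "vp (t x) w" by (auto simp: vp_Cons)
  then have "bij_betw (L x \<circ> lam w) (Aset A s (pt (t x) w)) (Aset A s (s x))"
    using Cons.IH[of "t x"] nd[of x] by (auto intro: bij_betw_trans)
  then show ?case using \<open>s x = v\<close> by (simp add: comp_def)
qed

lemma lam_in: "vp v w \<Longrightarrow> b \<in> Aset A s (pt v w) \<Longrightarrow> lam w b \<in> Aset A s v"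
  using lam_bij bij_betwE by blast

lemma phi_sub: "vp v w \<Longrightarrow> set_mset (phi w) \<subseteq> Aset A s v"
proof (induction w arbitrary: v)
  case Nil then show ?case by simp
next
  case (Cons x w)
  then have "x \<in> A" "s x = v" "vp (t x) w" by (auto simp: vp_Cons)
  with Cons.IH[of "t x"] nd[of x] show ?case
    by (auto simp: Aset_def bij_betw_def)
qed

lemma ap_swap: "ap (P @ x # y # Q) \<Longrightarrow> ap (P @ L x y # R x y # Q)"
  using LR[of x y] by (auto simp: arrow_path_append arrow_path_Cons)

lemma step_cases: "step w w' \<Longrightarrow> \<exists>us x y ws. w = us @ [x, y] @ ws \<and> w' = us @ [L x y, R x y] @ ws
   \<and> x \<in> A \<and> y \<in> A \<and> t x = s y \<and> ap us \<and> ap (y # ws) \<and> (us \<noteq> [] \<longrightarrow> t (last us) = s x)"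
proof -
  assume "step w w'"
  then obtain us x y ws where *: "ap (us @ [x, y] @ ws)" "w = us @ [x, y] @ ws" "w' = us @ [L x y, R x y] @ ws"
    unfolding step_def by blast
  from *(1) have "x \<in> A \<and> y \<in> A \<and> t x = s y \<and> ap us \<and> ap (y # ws) \<and> (us \<noteq> [] \<longrightarrow> t (last us) = s x)"
    by (auto simp: arrow_path_append arrow_path_Cons)
  with * show ?thesis by blast
qed

lemma step_ap: "step w w' \<Longrightarrow> ap w'"
  unfolding step_def using ap_swap by auto

lemma step_sym: "step w w' \<Longrightarrow> step w' w"
proof -
  assume "step w w'"
  then obtain us x y ws where *: "w = us @ [x, y] @ ws" "w' = us @ [L x y, R x y] @ ws"
    "x \<in> A" "y \<in> A" "t x = s y" by (blast dest: step_cases)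
  have "ap w'" using \<open>step w w'\<close> step_ap by blast
  then show "step w' w" unfolding step_def using * invol[of x y]
    by (metis)
qed

lemma E_sym: "E w w' \<Longrightarrow> E w' w"
  using rtranclp_sym[of step] step_sym by blast

lemma step_ctx: "step w w' \<Longrightarrow> ap (p @ w @ q) \<Longrightarrow> step (p @ w @ q) (p @ w' @ q)"
  unfolding step_def by (metis append.assoc)

lemma step_inv: "step w w' \<Longrightarrow> w \<noteq> [] \<and> length w' = length w \<and> s (hd w') = s (hd w) \<and> t (last w') = t (last w)"
  apply (drule step_cases)
  apply clarify
  using LR by (auto simp: hd_append last_append)

lemma step_ap_ctx: "step w w' \<Longrightarrow> ap (p @ w @ q) \<Longrightarrow> ap (p @ w' @ q)"
  using step_ctx step_ap by blast

lemma E_ap_ctx: "E w w' \<Longrightarrow> ap (p @ w @ q) \<Longrightarrow> ap (p @ w' @ q)"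
  by (induction rule: rtranclp_induct) (auto intro: step_ap_ctx)

lemma E_cong: "E w w' \<Longrightarrow> ap (p @ w @ q) \<Longrightarrow> E (p @ w @ q) (p @ w' @ q)"
proof (induction rule: rtranclp_induct)
  case base then show ?case by simp
next
  case (step y z)
  then have "ap (p @ y @ q)" using E_ap_ctx by blast
  with step show ?case by (meson rtranclp.rtrancl_into_rtrancl step_ctx)
qed

lemma E_vp: "E w w' \<Longrightarrow> vp v w \<Longrightarrow> vp v w' \<and> pt v w' = pt v w \<and> length w' = length w"
proof (induction rule: rtranclp_induct)
  case base then show ?case by simp
next
  case (step y z)
  then have "ap z" using step_ap by blast
  with step step_inv[OF step(2)] show ?case by (auto simp: vp_def pt_def)
qed

lemma phi_step: "step w w' \<Longrightarrow> phi w = phi w'"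
proof -
  assume "step w w'"
  then obtain us x y ws where *: "w = us @ [x, y] @ ws" "w' = us @ [L x y, R x y] @ ws"
    "x \<in> A" "y \<in> A" "t x = s y" "ap (y # ws)" by (blast dest: step_cases)
  have vws: "vp (t y) ws" using *(6) by (auto simp: vp_def arrow_path_Cons)
  have "image_mset (L x \<circ> L y) (phi ws) = image_mset (L (L x y) \<circ> L (R x y)) (phi ws)"
  proof (rule image_mset_cong)
    fix b assume "b \<in># phi ws"
    then have "b \<in> A" "s b = t y" using phi_sub[OF vws] by (auto simp: Aset_def)
    then show "(L x \<circ> L y) b = (L (L x y) \<circ> L (R x y)) b" using braid[of x y b] * by simp
  qed
  then have "phi (x # y # ws) = phi (L x y # R x y # ws)"
    using invol[of x y] * by (simp add: multiset.map_comp)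
  then show ?thesis using * by (metis append_Cons append_Nil phi_append)
qed

lemma phi_E: "E w w' \<Longrightarrow> phi w = phi w'"
  by (induction rule: rtranclp_induct) (auto simp: phi_step)

lemma lam_step: "step w w' \<Longrightarrow> vp v w \<Longrightarrow> b \<in> Aset A s (pt v w) \<Longrightarrow> lam w b = lam w' b"
proof -
  assume st: "step w w'" and vw: "vp v w" and b: "b \<in> Aset A s (pt v w)"
  then obtain us x y ws where *: "w = us @ [x, y] @ ws" "w' = us @ [L x y, R x y] @ ws"
    "x \<in> A" "y \<in> A" "t x = s y" "ap (y # ws)" by (blast dest: step_cases)
  have vws: "vp (t y) ws" using *(6) by (auto simp: vp_def arrow_path_Cons)
  have "pt v w = pt (t y) ws" using * by (simp add: pt_append)
  then have "lam ws b \<in> Aset A s (t y)" using lam_in[OF vws] b by simp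
  then have "L x (L y (lam ws b)) = L (L x y) (L (R x y) (lam ws b))"
    using braid[of x y "lam ws b"] * by (simp add: Aset_def)
  then show ?thesis using * by (simp add: lam_append)
qed

lemma lam_E: "E w w' \<Longrightarrow> vp v w \<Longrightarrow> b \<in> Aset A s (pt v w) \<Longrightarrow> lam w b = lam w' b"
proof (induction rule: rtranclp_induct)
  case base then show ?case by simp
next
  case (step y z)
  then have "vp v y" "pt v y = pt v w" using E_vp by blast+
  with step lam_step[OF step(2)] show ?case by metis
qed

lemma first_letter: "vp v w \<Longrightarrow> a \<in># phi w \<Longrightarrow> \<exists>u. E w (a # u)"
proof (induction w arbitrary: v a)
  case Nil then show ?case by simp
next
  case (Cons x w)
  then have x: "x \<in> A" "s x = v" and vw: "vp (t x) w" by (auto simp: vp_Cons)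
  show ?case
  proof (cases "a = x")
    case True then show ?thesis by blast
  next
    case False
    then obtain b where b: "b \<in># phi w" "a = L x b" using Cons.prems by auto
    obtain u where u: "E w (b # u)" using Cons.IH[OF vw b(1)] by blast
    have "ap ([x] @ w @ [])" using Cons.prems by (simp add: vp_def)
    from E_cong[OF u this] have e1: "E (x # w) (x # b # u)" by simp
    have "vp (t x) (b # u)" using E_vp[OF u vw] by simp
    then have "ap (x # b # u)" using x by (auto simp: vp_def arrow_path_Cons)
    then have "step (x # b # u) (L x b # R x b # u)" unfolding step_def
      by (metis append.left_neutral append_Cons)
    with e1 b show ?thesis by (meson rtranclp.rtrancl_into_rtrancl)
  qed
qed

lemma phi_inj: "vp v w \<Longrightarrow> vp v w' \<Longrightarrow> phi w = phi w' \<Longrightarrow> E w w'"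
proof (induction w arbitrary: w' v)
  case Nil
  then have "w' = []" using size_phi[of w'] by (metis length_0_conv phi.simps(1) size_empty)
  then show ?case by simp
next
  case (Cons a u)
  then have a: "a \<in> A" "s a = v" and vu: "vp (t a) u" by (auto simp: vp_Cons)
  have "a \<in># phi w'" using Cons.prems by (metis phi.simps(2) union_single_eq_member)
  then obtain u'' where e: "E w' (a # u'')" using first_letter Cons.prems by blast
  have "vp v (a # u'')" using E_vp[OF e] Cons.prems by blast
  then have vu'': "vp (t a) u''" by (simp add: vp_Cons)
  have "phi (a # u'') = phi (a # u)" using phi_E[OF e] Cons.prems by simp
  then have "image_mset (L a) (phi u) = image_mset (L a) (phi u'')" by simp
  moreover have "inj_on (L a) (Aset A s (t a))" using nd[OF a(1)] bij_betw_def by blast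
  ultimately have "phi u = phi u''" using image_mset_inj_eq phi_sub[OF vu] phi_sub[OF vu''] by blast
  then have "E u u''" using Cons.IH vu vu'' by blast
  moreover have "ap ([a] @ u @ [])" using Cons.prems by (simp add: vp_def)
  ultimately have "E (a # u) (a # u'')" using E_cong by fastforce
  then show ?case using E_sym[OF e] by (meson rtranclp_trans)
qed

lemma cancel_left: "vp v (p @ u) \<Longrightarrow> vp v (p @ u') \<Longrightarrow> E (p @ u) (p @ u') \<Longrightarrow> E u u'"
proof -
  assume v1: "vp v (p @ u)" and v2: "vp v (p @ u')" and e: "E (p @ u) (p @ u')"
  then have vp: "vp v p" and vu: "vp (pt v p) u" and vu': "vp (pt v p) u'" by (auto simp: vp_append)
  have "image_mset (lam p) (phi u) = image_mset (lam p) (phi u')"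
    using phi_E[OF e] by (simp add: phi_append)
  moreover have "inj_on (lam p) (Aset A s (pt v p))" using lam_bij[OF vp] bij_betw_def by blast
  ultimately have "phi u = phi u'" using image_mset_inj_eq phi_sub[OF vu] phi_sub[OF vu'] by blast
  then show ?thesis using phi_inj vu vu' by blast
qed

lemma divides: "vp v f \<Longrightarrow> vp v g \<Longrightarrow> phi f \<subseteq># phi g \<Longrightarrow> \<exists>h. vp v (f @ h) \<and> E g (f @ h)"
proof (induction f arbitrary: g v)
  case Nil then show ?case by auto
next
  case (Cons a f')
  then have a: "a \<in> A" "s a = v" and vf: "vp (t a) f'" by (auto simp: vp_Cons)
  have "a \<in># phi g" using Cons.prems(3) by (simp add: insert_subset_eq_iff)
  then obtain g' where e: "E g (a # g')" using first_letter Cons.prems by blast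
  have "vp v (a # g')" using E_vp[OF e] Cons.prems by blast
  then have vg: "vp (t a) g'" by (simp add: vp_Cons)
  have "phi (a # f') \<subseteq># phi (a # g')" using phi_E[OF e] Cons.prems by simp
  then have "image_mset (L a) (phi f') \<subseteq># image_mset (L a) (phi g')" by simp
  moreover have "inj_on (L a) (Aset A s (t a))" using nd[OF a(1)] bij_betw_def by blast
  ultimately have "phi f' \<subseteq># phi g'" using image_mset_inj_sub phi_sub[OF vf] phi_sub[OF vg] by blast
  then obtain h where h: "vp (t a) (f' @ h)" "E g' (f' @ h)" using Cons.IH vf vg by blast
  have "ap ([a] @ g' @ [])" using \<open>vp v (a # g')\<close> by (simp add: vp_def)
  then have "E (a # g') (a # f' @ h)" using E_cong[OF h(2)] by fastforce
  moreover have "vp v ((a # f') @ h)" using h a by (simp add: vp_Cons)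
  ultimately show ?case using e by (metis rtranclp_trans append_Cons)
qed

lemma phi_surj: "set_mset M \<subseteq> Aset A s v \<Longrightarrow> \<exists>w. vp v w \<and> phi w = M"
proof (induction "size M" arbitrary: M v)
  case 0 then show ?case by (intro exI[of _ "[]"]) auto
next
  case (Suc n)
  then obtain a where a: "a \<in># M" by (metis size_empty nat.distinct(1) multiset_nonemptyE)
  define M' where "M' = M - {#a#}"
  have M: "M = add_mset a M'" using a by (simp add: M'_def)
  have aA: "a \<in> A" "s a = v" using a Suc.prems by (auto simp: Aset_def)
  have bij: "bij_betw (L a) (Aset A s (t a)) (Aset A s v)" using nd[OF aA(1)] aA by simp
  define N where "N = image_mset (inv_into (Aset A s (t a)) (L a)) M'"
  have M'sub: "set_mset M' \<subseteq> Aset A s v" using Suc.prems M by auto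
  have "set_mset N \<subseteq> Aset A s (t a)"
    using M'sub bij_betw_inv_into[OF bij] by (auto simp: N_def bij_betw_def)
  moreover have "n = size N" using Suc.hyps(2) M by (simp add: N_def)
  ultimately obtain w where w: "vp (t a) w" "phi w = N" using Suc.hyps(1) by blast
  have "image_mset (L a) N = M'"
  proof -
    have "image_mset (L a) N = image_mset (L a \<circ> inv_into (Aset A s (t a)) (L a)) M'"
      by (simp add: N_def multiset.map_comp)
    also have "\<dots> = image_mset id M'"
      by (rule image_mset_cong) (use M'sub bij in \<open>auto simp: bij_betw_inv_into_right\<close>)
    finally show ?thesis by simp
  qed
  then show ?case using w aA M by (intro exI[of _ "a # w"]) (simp add: vp_Cons)
qed

end

locale yb =
  fixes Lam :: "'v set" and A :: "'a set" and s t :: "'a \<Rightarrow> 'v" and \<sigma> :: "'a \<times> 'a \<Rightarrow> 'a \<times> 'a"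
  assumes ybm: "yang_baxter_map Lam A s t \<sigma>"
    and inv: "involutive_qmap A s t \<sigma>"
    and ndg: "nondegenerate A s t \<sigma>"
begin

lemma quiv: "x \<in> A \<Longrightarrow> s x \<in> Lam \<and> t x \<in> Lam"
  using ybm by (auto simp: yang_baxter_map_def is_quiver_def)

lemma LR0: "\<lbrakk>x \<in> A; y \<in> A; t x = s y\<rbrakk> \<Longrightarrow> lact \<sigma> x y \<in> A \<and> ract \<sigma> x y \<in> A \<and> t (lact \<sigma> x y) = s (ract \<sigma> x y) \<and> s (lact \<sigma> x y) = s x \<and> t (ract \<sigma> x y) = t y"
  using ybm by (auto simp: yang_baxter_map_def quiver_map_def composable_def)

lemma invol0: "\<lbrakk>x \<in> A; y \<in> A; t x = s y\<rbrakk> \<Longrightarrow> lact \<sigma> (lact \<sigma> x y) (ract \<sigma> x y) = x \<and> ract \<sigma> (lact \<sigma> x y) (ract \<sigma> x y) = y"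
  using inv by (auto simp: involutive_qmap_def composable_def lact_def ract_def)

lemma ybe0:
  assumes "x \<in> A" "y \<in> A" "z \<in> A" "t x = s y" "t y = s z"
  shows "lact \<sigma> x (lact \<sigma> y z) = lact \<sigma> (lact \<sigma> x y) (lact \<sigma> (ract \<sigma> x y) z)
       \<and> ract \<sigma> (ract \<sigma> x y) z = ract \<sigma> (ract \<sigma> x (lact \<sigma> y z)) (ract \<sigma> y z)"
proof -
  have "sigma12 \<sigma> (sigma23 \<sigma> (sigma12 \<sigma> (x, y, z))) = sigma23 \<sigma> (sigma12 \<sigma> (sigma23 \<sigma> (x, y, z)))"
    using ybm assms by (auto simp: yang_baxter_map_def composable_def)
  then show ?thesis
    by (simp add: sigma12_def sigma23_def lact_def ract_def case_prod_unfold) (metis snd_conv)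
qed

sublocale Lq: qyb A s t "lact \<sigma>" "ract \<sigma>"
proof
  fix x y z
  show "\<lbrakk>x \<in> A; y \<in> A; t x = s y\<rbrakk> \<Longrightarrow> lact \<sigma> x y \<in> A \<and> ract \<sigma> x y \<in> A \<and> t (lact \<sigma> x y) = s (ract \<sigma> x y) \<and> s (lact \<sigma> x y) = s x \<and> t (ract \<sigma> x y) = t y"
    by (rule LR0)
  show "\<lbrakk>x \<in> A; y \<in> A; t x = s y\<rbrakk> \<Longrightarrow> lact \<sigma> (lact \<sigma> x y) (ract \<sigma> x y) = x \<and> ract \<sigma> (lact \<sigma> x y) (ract \<sigma> x y) = y"
    by (rule invol0)
  show "x \<in> A \<Longrightarrow> bij_betw (lact \<sigma> x) (Aset A s (t x)) (Aset A s (s x))"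
    using ndg by (auto simp: nondegenerate_def Aset_def)
  show "\<lbrakk>x \<in> A; y \<in> A; z \<in> A; t x = s y; t y = s z\<rbrakk> \<Longrightarrow> lact \<sigma> x (lact \<sigma> y z) = lact \<sigma> (lact \<sigma> x y) (lact \<sigma> (ract \<sigma> x y) z)"
    using ybe0 by blast
qed

sublocale Rq: qyb A t s "\<lambda>a b. ract \<sigma> b a" "\<lambda>a b. lact \<sigma> b a"
  apply unfold_locales
  using LR0 apply force
  using invol0 apply force
  using ndg apply (force simp: nondegenerate_def Aset_def)
  using ybe0 apply force
  done

lemma step_rev1: "Lq.step w w' \<Longrightarrow> Rq.step (rev w) (rev w')"
proof -
  assume "Lq.step w w'"
  then obtain us x y ws where *: "Lq.ap w" "w = us @ [x, y] @ ws" "w' = us @ [lact \<sigma> x y, ract \<sigma> x y] @ ws"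
    unfolding Lq.step_def by blast
  have "rev w = rev ws @ [y, x] @ rev us" "rev w' = rev ws @ [ract \<sigma> x y, lact \<sigma> x y] @ rev us"
    using * by auto
  moreover have "Rq.ap (rev w)" using *(1) arrow_path_rev by blast
  ultimately show ?thesis unfolding Rq.step_def by blast
qed

lemma step_rev2: "Rq.step w w' \<Longrightarrow> Lq.step (rev w) (rev w')"
proof -
  assume "Rq.step w w'"
  then obtain us x y ws where *: "Rq.ap w" "w = us @ [x, y] @ ws" "w' = us @ [ract \<sigma> y x, lact \<sigma> y x] @ ws"
    unfolding Rq.step_def by blast
  have "rev w = rev ws @ [y, x] @ rev us" "rev w' = rev ws @ [lact \<sigma> y x, ract \<sigma> y x] @ rev us"
    using * by auto
  moreover have "Lq.ap (rev w)" using *(1) by (metis arrow_path_rev rev_rev_ident)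
  ultimately show ?thesis unfolding Lq.step_def by blast
qed

lemma E_rev1: "Lq.E w w' \<Longrightarrow> Rq.E (rev w) (rev w')"
  by (induction rule: rtranclp_induct) (auto intro: rtranclp.rtrancl_into_rtrancl step_rev1)

lemma E_rev2: "Rq.E w w' \<Longrightarrow> Lq.E (rev w) (rev w')"
  by (induction rule: rtranclp_induct) (auto intro: rtranclp.rtrancl_into_rtrancl step_rev2)

lemma E_rev_iff: "Rq.E (rev w) (rev w') \<longleftrightarrow> Lq.E w w'"
  using E_rev1 E_rev2 by fastforce

lemma dual: "(Lq.vp x w \<and> Lq.pt x w = y) \<longleftrightarrow> (Rq.vp y (rev w) \<and> Rq.pt y (rev w) = x)"
  unfolding Lq.vp_def Rq.vp_def Lq.pt_def Rq.pt_def arrow_path_rev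
  by (auto simp: hd_rev last_rev)

abbreviation "C \<equiv> structure_category Lam A s t \<sigma>"
abbreviation "valid \<equiv> valid_path Lam A s t"
abbreviation "cls \<equiv> sc_class Lam A s t \<sigma>"

definition rep :: "('v \<times> 'a list) set \<Rightarrow> 'v \<times> 'a list" where
  "rep M = (SOME q. q \<in> M)"

lemma valid_iff: "valid p \<longleftrightarrow> fst p \<in> Lam \<and> Lq.vp (fst p) (snd p)"
  by (auto simp: valid_path_def Lq.vp_def)

lemma path_tgt_eq: "path_tgt t p = Lq.pt (fst p) (snd p)"
  by (simp add: path_tgt_def Lq.pt_def)

lemma sc_step_D: "sc_step Lam A s t \<sigma> p q \<Longrightarrow> valid p \<and> fst q = fst p \<and> Lq.step (snd p) (snd q)"
  by (induction rule: sc_step.induct) (auto simp: Lq.step_def valid_path_def)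

lemma sc_step_I: "valid p \<Longrightarrow> Lq.step (snd p) w \<Longrightarrow> sc_step Lam A s t \<sigma> p (fst p, w)"
  unfolding Lq.step_def
  using sc_step.intros[of Lam A s t "fst p"] by (cases p) (auto simp: lact_def ract_def)

lemma sc_eq_valid: "sc_eq Lam A s t \<sigma> p q \<Longrightarrow> valid p \<Longrightarrow> valid q \<and> fst q = fst p \<and> Lq.E (snd p) (snd q)"
  unfolding sc_eq_def
proof (induction rule: rtranclp_induct)
  case base then show ?case by simp
next
  case (step y z)
  then have vy: "valid y" "fst y = fst p" "Lq.E (snd p) (snd y)" by auto
  from step(2) show ?case
  proof
    assume "sc_step Lam A s t \<sigma> y z"
    then have "fst z = fst y" "Lq.step (snd y) (snd z)" using sc_step_D by blast+
    moreover have "Lq.vp (fst y) (snd z)"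
      using Lq.E_vp[of "snd y" "snd z"] vy(1) calculation(2) valid_iff by blast
    ultimately show ?thesis using vy valid_iff
      by (metis rtranclp.rtrancl_into_rtrancl)
  next
    assume "sc_step Lam A s t \<sigma> z y"
    then have "valid z" "fst y = fst z" "Lq.step (snd z) (snd y)" using sc_step_D by blast+
    then show ?thesis using vy Lq.step_sym by (metis rtranclp.rtrancl_into_rtrancl)
  qed
qed

lemma E_sc_eq: "Lq.E (snd p) w \<Longrightarrow> valid p \<Longrightarrow> sc_eq Lam A s t \<sigma> p (fst p, w)"
proof (induction rule: rtranclp_induct)
  case base then show ?case by (simp add: sc_eq_def)
next
  case (step y z)
  have "valid (fst p, y)" using Lq.E_vp[OF step(1)] step(4) valid_iff by auto
  then have "sc_step Lam A s t \<sigma> (fst p, y) (fst p, z)" using sc_step_I step(2) by fastforce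
  then show ?case using step unfolding sc_eq_def by (auto intro: rtranclp.rtrancl_into_rtrancl)
qed

lemma cls_iff: "valid p \<Longrightarrow> q \<in> cls p \<longleftrightarrow> valid q \<and> fst q = fst p \<and> Lq.E (snd p) (snd q)"
  unfolding sc_class_def using sc_eq_valid E_sc_eq
  by (metis mem_Collect_eq prod.collapse)

lemma cls_eq_iff: "valid p \<Longrightarrow> valid q \<Longrightarrow> cls p = cls q \<longleftrightarrow> fst p = fst q \<and> Lq.E (snd p) (snd q)"
proof
  assume vp: "valid p" and vq: "valid q" and eq: "cls p = cls q"
  have "q \<in> cls q" using cls_iff[OF vq] vq by simp
  then show "fst p = fst q \<and> Lq.E (snd p) (snd q)" using eq cls_iff[OF vp] by auto
next
  assume vp: "valid p" and vq: "valid q" and h: "fst p = fst q \<and> Lq.E (snd p) (snd q)"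
  show "cls p = cls q"
  proof (rule set_eqI)
    fix r
    show "r \<in> cls p \<longleftrightarrow> r \<in> cls q"
      using h cls_iff[OF vp] cls_iff[OF vq] Lq.E_sym by (metis rtranclp_trans)
  qed
qed

lemma rep_cls: "valid p \<Longrightarrow> valid (rep (cls p)) \<and> fst (rep (cls p)) = fst p \<and> Lq.E (snd p) (snd (rep (cls p)))"
proof -
  assume vp: "valid p"
  have "p \<in> cls p" using cls_iff[OF vp] vp by simp
  then have "rep (cls p) \<in> cls p" unfolding rep_def by (rule someI)
  then show ?thesis using cls_iff[OF vp] by blast
qed

lemma cls_rep: "valid p \<Longrightarrow> cls (rep (cls p)) = cls p"
  using rep_cls cls_eq_iff Lq.E_sym by metis

lemma mor_C: "mor C = cls ` {p. valid p}"
  by (simp add: structure_category_def)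

lemma morE: "f \<in> mor C \<Longrightarrow> (\<And>p. valid p \<Longrightarrow> f = cls p \<Longrightarrow> P) \<Longrightarrow> P"
  using mor_C by auto

lemma cls_mor: "valid p \<Longrightarrow> cls p \<in> mor C"
  using mor_C by auto

lemma src_cls: "valid p \<Longrightarrow> src C (cls p) = fst p"
  using rep_cls unfolding rep_def by (simp add: structure_category_def)

lemma tgt_cls: "valid p \<Longrightarrow> tgt C (cls p) = Lq.pt (fst p) (snd p)"
proof -
  assume vp: "valid p"
  have "tgt C (cls p) = path_tgt t (rep (cls p))" by (simp add: structure_category_def rep_def)
  also have "\<dots> = Lq.pt (fst p) (snd p)"
    using rep_cls[OF vp] Lq.E_vp vp valid_iff path_tgt_eq by metis
  finally show ?thesis .
qed

lemma valid_app: "valid p \<Longrightarrow> valid q \<Longrightarrow> Lq.pt (fst p) (snd p) = fst q \<Longrightarrow> valid (fst p, snd p @ snd q)"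
  using valid_iff Lq.vp_append by auto

lemma cmp_cls: "valid p \<Longrightarrow> valid q \<Longrightarrow> Lq.pt (fst p) (snd p) = fst q \<Longrightarrow>
   cmp C (cls p) (cls q) = cls (fst p, snd p @ snd q)"
proof -
  assume vp: "valid p" and vq: "valid q" and pq: "Lq.pt (fst p) (snd p) = fst q"
  define r1 where "r1 = rep (cls p)"
  define r2 where "r2 = rep (cls q)"
  have r1: "valid r1" "fst r1 = fst p" "Lq.E (snd p) (snd r1)" using rep_cls[OF vp] r1_def by auto
  have r2: "valid r2" "fst r2 = fst q" "Lq.E (snd q) (snd r2)" using rep_cls[OF vq] r2_def by auto
  have "cmp C (cls p) (cls q) = cls (fst r1, snd r1 @ snd r2)"
    by (simp add: structure_category_def r1_def r2_def rep_def)
  also have "\<dots> = cls (fst p, snd p @ snd q)"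
  proof -
    have v1: "valid (fst p, snd p @ snd q)" using valid_app[OF vp vq pq] .
    have pt1: "Lq.pt (fst r1) (snd r1) = fst r2"
      using Lq.E_vp[OF r1(3)] vp valid_iff r1 r2 pq by metis
    have v2: "valid (fst r1, snd r1 @ snd r2)" using valid_app[OF r1(1) r2(1) pt1] .
    have "Lq.ap ([] @ snd p @ snd q)" using v1 valid_iff Lq.vp_def by simp
    then have e1: "Lq.E (snd p @ snd q) (snd r1 @ snd q)" using Lq.E_cong[OF r1(3), of "[]" "snd q"] by simp
    have "Lq.vp (fst p) (snd r1 @ snd q)"
      using v1 valid_iff Lq.vp_append Lq.E_vp[OF r1(3)] vp by auto
    then have "Lq.ap (snd r1 @ snd q @ [])" using Lq.vp_def by simp
    then have e2: "Lq.E (snd r1 @ snd q) (snd r1 @ snd r2)" using Lq.E_cong[OF r2(3), of "snd r1" "[]"] by simp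
    show ?thesis using cls_eq_iff[OF v2 v1] e1 e2 r1 Lq.E_sym by (metis fst_conv snd_conv rtranclp_trans)
  qed
  finally show ?thesis .
qed

lemma idm_C: "idm C v = cls (v, [])"
  by (simp add: structure_category_def)

lemma ob_C: "ob C = Lam"
  by (simp add: structure_category_def)

end

lemma arrow_path_last: "arrow_path A s t w \<Longrightarrow> w \<noteq> [] \<Longrightarrow> last w \<in> A"
  by (induction w) (auto simp: arrow_path_Cons)

context yb
begin

lemma pt_Lam: "Lq.vp x w \<Longrightarrow> x \<in> Lam \<Longrightarrow> Lq.pt x w \<in> Lam"
proof (cases "w = []")
  case False
  assume "Lq.vp x w"
  then have "last w \<in> A" using arrow_path_last False by (auto simp: Lq.vp_def)
  then show ?thesis using quiv False by (simp add: Lq.pt_def)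
qed (simp add: Lq.pt_def)

lemma start_Lam: "Lq.vp x w \<Longrightarrow> Lq.pt x w \<in> Lam \<Longrightarrow> x \<in> Lam"
proof (cases w)
  case (Cons a l)
  assume "Lq.vp x w"
  then have "a \<in> A" "s a = x" using arrow_path_hd Cons by (auto simp: Lq.vp_def)
  then show ?thesis using quiv by blast
qed (simp add: Lq.pt_def)

lemma src_tgt_Lam: "f \<in> mor C \<Longrightarrow> src C f \<in> Lam \<and> tgt C f \<in> Lam"
  by (erule morE) (auto simp: src_cls tgt_cls valid_iff pt_Lam)

lemma cmp_C:
  assumes "f \<in> mor C" "g \<in> mor C" "tgt C f = src C g"
  shows "cmp C f g \<in> mor C \<and> src C (cmp C f g) = src C f \<and> tgt C (cmp C f g) = tgt C g"
proof -
  obtain p q where p: "valid p" "f = cls p" and q: "valid q" "g = cls q" using assms morE by metis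
  have pq: "Lq.pt (fst p) (snd p) = fst q" using assms p q by (simp add: src_cls tgt_cls)
  have v: "valid (fst p, snd p @ snd q)" using valid_app[OF p(1) q(1) pq] .
  show ?thesis using cmp_cls[OF p(1) q(1) pq] p q v cls_mor src_cls tgt_cls pq
    by (simp add: Lq.pt_append)
qed

lemma assoc_C:
  assumes "f \<in> mor C" "g \<in> mor C" "h \<in> mor C" "tgt C f = src C g" "tgt C g = src C h"
  shows "cmp C (cmp C f g) h = cmp C f (cmp C g h)"
proof -
  obtain p q r where p: "valid p" "f = cls p" and q: "valid q" "g = cls q" and r: "valid r" "h = cls r"
    using assms morE by metis
  have pq: "Lq.pt (fst p) (snd p) = fst q" using assms p q by (simp add: src_cls tgt_cls)
  have qr: "Lq.pt (fst q) (snd q) = fst r" using assms q r by (simp add: src_cls tgt_cls)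
  have v1: "valid (fst p, snd p @ snd q)" using valid_app[OF p(1) q(1) pq] .
  have v2: "valid (fst q, snd q @ snd r)" using valid_app[OF q(1) r(1) qr] .
  have pq2: "Lq.pt (fst p) (snd p @ snd q) = fst r" using pq qr by (simp add: Lq.pt_append)
  show ?thesis
    using cmp_cls[OF p(1) q(1) pq] cmp_cls[OF q(1) r(1) qr] cmp_cls[OF v1 r(1)] cmp_cls[OF p(1) v2] p q r pq pq2
    by simp
qed

lemma idm_mor: "x \<in> Lam \<Longrightarrow> idm C x \<in> mor C \<and> src C (idm C x) = x \<and> tgt C (idm C x) = x"
proof -
  assume x: "x \<in> Lam"
  then have v: "valid (x, [])" by (simp add: valid_iff)
  then show ?thesis using cls_mor src_cls tgt_cls idm_C by simp
qed

lemma idm_left: "f \<in> mor C \<Longrightarrow> cmp C (idm C (src C f)) f = f"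
proof -
  assume "f \<in> mor C"
  then obtain p where p: "valid p" "f = cls p" using morE by metis
  have v: "valid (fst p, [])" using p by (simp add: valid_iff)
  show ?thesis using cmp_cls[OF v p(1)] p idm_C src_cls by simp
qed

lemma idm_right: "f \<in> mor C \<Longrightarrow> cmp C f (idm C (tgt C f)) = f"
proof -
  assume "f \<in> mor C"
  then obtain p where p: "valid p" "f = cls p" using morE by metis
  have v: "valid (Lq.pt (fst p) (snd p), [])" using p pt_Lam by (simp add: valid_iff)
  show ?thesis using cmp_cls[OF p(1) v] p idm_C tgt_cls by simp
qed

lemma lcancel_C: "left_cancellative C"
  unfolding left_cancellative_def
proof (intro ballI impI)
  fix f g g' assume m: "f \<in> mor C" "g \<in> mor C" "g' \<in> mor C" and
    st: "src C g = tgt C f" "src C g' = tgt C f" and eq: "cmp C f g = cmp C f g'"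
  obtain p q q' where p: "valid p" "f = cls p" and q: "valid q" "g = cls q" and q': "valid q'" "g' = cls q'"
    using m morE by metis
  have pq: "Lq.pt (fst p) (snd p) = fst q" using st p q by (simp add: src_cls tgt_cls)
  have pq': "Lq.pt (fst p) (snd p) = fst q'" using st p q' by (simp add: src_cls tgt_cls)
  have v1: "valid (fst p, snd p @ snd q)" using valid_app[OF p(1) q(1) pq] .
  have v2: "valid (fst p, snd p @ snd q')" using valid_app[OF p(1) q'(1) pq'] .
  have "Lq.E (snd p @ snd q) (snd p @ snd q')"
    using eq cmp_cls[OF p(1) q(1) pq] cmp_cls[OF p(1) q'(1) pq'] p q q' cls_eq_iff[OF v1 v2] by simp
  then have "Lq.E (snd q) (snd q')"
    using Lq.cancel_left v1 v2 valid_iff by (metis fst_conv snd_conv)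
  then show "g = g'" using cls_eq_iff[OF q(1) q'(1)] q q' pq pq' by simp
qed

lemma rcancel_C: "right_cancellative C"
  unfolding right_cancellative_def
proof (intro ballI impI)
  fix f f' g assume m: "f \<in> mor C" "f' \<in> mor C" "g \<in> mor C" and
    st: "tgt C f = src C g" "tgt C f' = src C g" and eq: "cmp C f g = cmp C f' g"
  obtain p p' q where p: "valid p" "f = cls p" and p': "valid p'" "f' = cls p'" and q: "valid q" "g = cls q"
    using m morE by metis
  have pq: "Lq.pt (fst p) (snd p) = fst q" using st p q by (simp add: src_cls tgt_cls)
  have pq': "Lq.pt (fst p') (snd p') = fst q" using st p' q by (simp add: src_cls tgt_cls)
  have v1: "valid (fst p, snd p @ snd q)" using valid_app[OF p(1) q(1) pq] .
  have v2: "valid (fst p', snd p' @ snd q)" using valid_app[OF p'(1) q(1) pq'] .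
  have e: "fst p = fst p'" "Lq.E (snd p @ snd q) (snd p' @ snd q)"
    using eq cmp_cls[OF p(1) q(1) pq] cmp_cls[OF p'(1) q(1) pq'] p p' q cls_eq_iff[OF v1 v2] by simp_all
  define z where "z = Lq.pt (fst q) (snd q)"
  have "Lq.vp (fst p) (snd p @ snd q) \<and> Lq.pt (fst p) (snd p @ snd q) = z"
    using v1 valid_iff pq by (simp add: Lq.pt_append z_def)
  then have r1: "Rq.vp z (rev (snd q) @ rev (snd p))" using dual by simp
  have "Lq.vp (fst p') (snd p' @ snd q) \<and> Lq.pt (fst p') (snd p' @ snd q) = z"
    using v2 valid_iff pq' by (simp add: Lq.pt_append z_def)
  then have r2: "Rq.vp z (rev (snd q) @ rev (snd p'))" using dual by simp
  have "Rq.E (rev (snd q) @ rev (snd p)) (rev (snd q) @ rev (snd p'))"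
    using E_rev1[OF e(2)] by simp
  then have "Rq.E (rev (snd p)) (rev (snd p'))" using Rq.cancel_left r1 r2 by blast
  then have "Lq.E (snd p) (snd p')" using E_rev_iff by blast
  then show "f = f'" using cls_eq_iff[OF p(1) p'(1)] p p' e by simp
qed

definition psi :: "'a list \<Rightarrow> 'a multiset" where
  "psi w = Rq.phi (rev w)"

lemma rd_tgt: "right_divides C f h \<Longrightarrow> tgt C h = tgt C f"
proof -
  assume "right_divides C f h"
  then obtain u where "u \<in> mor C" "f \<in> mor C" "tgt C u = src C f" "cmp C u f = h"
    unfolding right_divides_def by blast
  then show ?thesis using cmp_C[of u f] by simp
qed

lemma rd_iff:
  assumes pf: "valid pf" and ph: "valid ph"
    and tt: "Lq.pt (fst pf) (snd pf) = Lq.pt (fst ph) (snd ph)"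
  shows "right_divides C (cls pf) (cls ph) \<longleftrightarrow> psi (snd pf) \<subseteq># psi (snd ph)"
proof
  assume "right_divides C (cls pf) (cls ph)"
  then obtain u where u: "u \<in> mor C" "tgt C u = src C (cls pf)" "cmp C u (cls pf) = cls ph"
    unfolding right_divides_def by blast
  obtain pu where pu: "valid pu" "u = cls pu" using u morE by metis
  have up: "Lq.pt (fst pu) (snd pu) = fst pf" using u pu pf by (simp add: src_cls tgt_cls)
  have v: "valid (fst pu, snd pu @ snd pf)" using valid_app[OF pu(1) pf up] .
  have "Lq.E (snd pu @ snd pf) (snd ph)" using u pu cmp_cls[OF pu(1) pf up] cls_eq_iff[OF v ph] by simp
  then have "Rq.E (rev (snd pu @ snd pf)) (rev (snd ph))" by (rule E_rev1)
  then have "Rq.phi (rev (snd pu @ snd pf)) = Rq.phi (rev (snd ph))" by (rule Rq.phi_E)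
  then have "Rq.phi (rev (snd ph)) = Rq.phi (rev (snd pf)) + image_mset (Rq.lam (rev (snd pf))) (Rq.phi (rev (snd pu)))"
    by (simp add: Rq.phi_append)
  then show "psi (snd pf) \<subseteq># psi (snd ph)" by (simp add: psi_def)
next
  assume sub: "psi (snd pf) \<subseteq># psi (snd ph)"
  define y where "y = Lq.pt (fst pf) (snd pf)"
  have "Lq.vp (fst pf) (snd pf) \<and> Lq.pt (fst pf) (snd pf) = y" using pf valid_iff y_def by simp
  then have d1: "Rq.vp y (rev (snd pf))" using dual[of "fst pf" "snd pf" y] by blast
  have "Lq.vp (fst ph) (snd ph) \<and> Lq.pt (fst ph) (snd ph) = y" using ph valid_iff y_def tt by simp
  then have d2: "Rq.vp y (rev (snd ph))" using dual[of "fst ph" "snd ph" y] by blast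
  have "Rq.phi (rev (snd pf)) \<subseteq># Rq.phi (rev (snd ph))" using sub unfolding psi_def .
  then obtain k where k: "Rq.vp y (rev (snd pf) @ k)" "Rq.E (rev (snd ph)) (rev (snd pf) @ k)"
    using Rq.divides[OF d1 d2] by blast
  define hh where "hh = rev k"
  have e: "Lq.E (snd ph) (hh @ snd pf)" using E_rev2[OF k(2)] by (simp add: hh_def)
  have phv: "Lq.vp (fst ph) (snd ph)" using ph valid_iff by blast
  have a1: "Lq.vp (fst ph) (hh @ snd pf)" "Lq.pt (fst ph) (hh @ snd pf) = y"
    using Lq.E_vp[OF e phv] tt y_def by auto
  from a1(1) have vh: "Lq.vp (fst ph) hh" and vf': "Lq.vp (Lq.pt (fst ph) hh) (snd pf)"
    by (simp_all add: Lq.vp_append)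
  from a1(2) have ptt: "Lq.pt (Lq.pt (fst ph) hh) (snd pf) = y"
    by (simp add: Lq.pt_append)
  have pfv: "Lq.vp (fst pf) (snd pf)" using pf valid_iff by blast
  have hf: "Lq.pt (fst ph) hh = fst pf"
    using Lq.vp_unique[OF vf' pfv] ptt y_def by simp
  have vu: "valid (fst ph, hh)" using vh ph valid_iff by simp
  have c1: "cmp C (cls (fst ph, hh)) (cls pf) = cls (fst ph, hh @ snd pf)"
    using cmp_cls[OF vu pf] hf by simp
  have v3: "valid (fst ph, hh @ snd pf)" using valid_app[OF vu pf] hf by simp
  have "Lq.E (snd ph) (hh @ snd pf)" using e .
  then have c2: "cls (fst ph, hh @ snd pf) = cls ph"
    using cls_eq_iff[OF v3 ph] Lq.E_sym by simp
  have "tgt C (cls (fst ph, hh)) = src C (cls pf)" using tgt_cls[OF vu] src_cls[OF pf] hf by simp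
  then show "right_divides C (cls pf) (cls ph)"
    unfolding right_divides_def using cls_mor[OF vu] cls_mor[OF pf] cls_mor[OF ph] c1 c2
    by blast
qed

lemma lcm_C:
  assumes f: "f \<in> mor C" and g: "g \<in> mor C" and fg: "tgt C f = tgt C g"
  shows "\<exists>h. is_left_lcm C f g h"
proof -
  obtain pf pg where pf: "valid pf" "f = cls pf" and pg: "valid pg" "g = cls pg" using f g morE by metis
  define y where "y = Lq.pt (fst pf) (snd pf)"
  have ty: "Lq.pt (fst pg) (snd pg) = y" using fg pf pg tgt_cls y_def by simp
  have "Lq.vp (fst pf) (snd pf) \<and> Lq.pt (fst pf) (snd pf) = y" using pf valid_iff y_def by simp
  then have d1: "Rq.vp y (rev (snd pf))" using dual[of "fst pf" "snd pf" y] by blast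
  have "Lq.vp (fst pg) (snd pg) \<and> Lq.pt (fst pg) (snd pg) = y" using pg valid_iff ty by simp
  then have d2: "Rq.vp y (rev (snd pg))" using dual[of "fst pg" "snd pg" y] by blast
  define M where "M = psi (snd pf) \<union># psi (snd pg)"
  have "set_mset M \<subseteq> Aset A t y"
    using Rq.phi_sub[OF d1] Rq.phi_sub[OF d2] by (auto simp: M_def psi_def)
  then obtain w' where w': "Rq.vp y w'" "Rq.phi w' = M" using Rq.phi_surj by blast
  define x0 where "x0 = Rq.pt y w'"
  define ww where "ww = rev w'"
  have "Lq.vp x0 ww \<and> Lq.pt x0 ww = y" using dual[of x0 ww y] w' x0_def ww_def by simp
  moreover have "y \<in> Lam" using pt_Lam pf valid_iff y_def by blast
  ultimately have vH: "valid (x0, ww)" and tH: "Lq.pt x0 ww = y" using start_Lam valid_iff by auto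
  have psiH: "psi ww = M" using w' by (simp add: psi_def ww_def)
  define H where "H = cls (x0, ww)"
  have rdf: "right_divides C f H" using rd_iff[OF pf(1) vH] pf tH y_def psiH by (simp add: H_def M_def)
  have rdg: "right_divides C g H" using rd_iff[OF pg(1) vH] pg tH ty psiH by (simp add: H_def M_def)
  have "\<forall>h'\<in>mor C. right_divides C f h' \<longrightarrow> right_divides C g h' \<longrightarrow> right_divides C H h'"
  proof (intro ballI impI)
    fix h' assume h': "h' \<in> mor C" "right_divides C f h'" "right_divides C g h'"
    obtain ph where ph: "valid ph" "h' = cls ph" using h' morE by metis
    have th: "Lq.pt (fst ph) (snd ph) = y" using rd_tgt[OF h'(2)] ph pf tgt_cls y_def by simp
    have "psi (snd pf) \<subseteq># psi (snd ph)" using rd_iff[OF pf(1) ph(1)] h' pf ph th y_def by simp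
    moreover have "psi (snd pg) \<subseteq># psi (snd ph)" using rd_iff[OF pg(1) ph(1)] h' pg ph th ty by simp
    ultimately have "M \<subseteq># psi (snd ph)" by (simp add: M_def)
    then show "right_divides C H h'" using rd_iff[OF vH ph(1)] th tH psiH ph by (simp add: H_def)
  qed
  then show ?thesis using rdf rdg unfolding is_left_lcm_def by blast
qed

lemma ore_C: "left_ore C"
  unfolding left_ore_def
proof (intro conjI lcancel_C rcancel_C ballI impI)
  fix x y assume m: "x \<in> mor C" "y \<in> mor C" "tgt C x = tgt C y"
  then obtain h where "is_left_lcm C x y h" using lcm_C by blast
  then have "right_divides C x h" "right_divides C y h" unfolding is_left_lcm_def by auto
  then show "\<exists>u\<in>mor C. \<exists>v\<in>mor C. tgt C u = src C x \<and> tgt C v = src C y \<and> cmp C u x = cmp C v y"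
    unfolding right_divides_def by metis
qed

end

fun wend :: "('o,'m) category \<Rightarrow> 'o \<Rightarrow> ('m \<times> bool) list \<Rightarrow> 'o" where
  "wend C x [] = x"
| "wend C x (l # w) = wend C (letter_tgt C l) w"

lemma wend_append: "wend C x (u @ v) = wend C (wend C x u) v"
  by (induction u arbitrary: x) auto

context yb
begin

lemma walk_Lam: "env_walk C x w \<Longrightarrow> x \<in> Lam"
  by (cases w) (auto simp: ob_C letter_src_def src_tgt_Lam split: if_splits)

lemma env_walk_append: "env_walk C x (u @ v) \<longleftrightarrow> env_walk C x u \<and> env_walk C (wend C x u) v"
  by (induction u arbitrary: x) (auto simp: ob_C dest: walk_Lam)

definition rw :: "('v \<times> 'a list) set \<Rightarrow> 'a list" where
  "rw M = snd (rep M)"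

definition PhiM where "PhiM M = Lq.phi (rw M)"
definition LamM where "LamM M = Lq.lam (rw M)"

definition D :: "'v \<Rightarrow> ('a \<Rightarrow> int) set" where
  "D v = {n. \<forall>a. a \<notin> Aset A s v \<longrightarrow> n a = 0}"

definition actp :: "('v \<times> 'a list) set \<Rightarrow> ('a \<Rightarrow> int) \<Rightarrow> ('a \<Rightarrow> int)" where
  "actp f n = (\<lambda>a. if a \<in> Aset A s (src C f)
       then int (count (PhiM f) a) + n (inv_into (Aset A s (tgt C f)) (LamM f) a) else 0)"

definition actn :: "('v \<times> 'a list) set \<Rightarrow> ('a \<Rightarrow> int) \<Rightarrow> ('a \<Rightarrow> int)" where
  "actn f n = (\<lambda>b. if b \<in> Aset A s (tgt C f)
       then n (LamM f b) - int (count (PhiM f) (LamM f b)) else 0)"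

definition act :: "('v \<times> 'a list) set \<times> bool \<Rightarrow> ('a \<Rightarrow> int) \<Rightarrow> ('a \<Rightarrow> int)" where
  "act l = (if snd l then actp (fst l) else actn (fst l))"

definition run :: "(('v \<times> 'a list) set \<times> bool) list \<Rightarrow> ('a \<Rightarrow> int) \<Rightarrow> ('a \<Rightarrow> int)" where
  "run w n = foldr act w n"

lemma run_Nil[simp]: "run [] n = n" by (simp add: run_def)
lemma run_Cons[simp]: "run (l # w) n = act l (run w n)" by (simp add: run_def)
lemma run_append: "run (u @ v) n = run u (run v n)" by (simp add: run_def)

lemma actp_D: "actp f n \<in> D (src C f)" by (simp add: actp_def D_def)
lemma actn_D: "actn f n \<in> D (tgt C f)" by (simp add: actn_def D_def)

lemma run_D: "env_walk C x w \<Longrightarrow> n \<in> D (wend C x w) \<Longrightarrow> run w n \<in> D x"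
proof (induction w arbitrary: x)
  case Nil then show ?case by simp
next
  case (Cons l w)
  then show ?case using actp_D actn_D
    by (auto simp: act_def letter_src_def)
qed

lemma rep_mor: "f \<in> mor C \<Longrightarrow> valid (rep f) \<and> cls (rep f) = f \<and> src C f = fst (rep f) \<and> tgt C f = Lq.pt (fst (rep f)) (rw f)"
proof -
  assume "f \<in> mor C"
  then obtain p where p: "valid p" "f = cls p" using morE by metis
  have r: "valid (rep f)" "cls (rep f) = f" using rep_cls[OF p(1)] cls_rep[OF p(1)] p by auto
  then show ?thesis using src_cls[OF r(1)] tgt_cls[OF r(1)] by (simp add: rw_def)
qed

lemma mor_facts:
  assumes "f \<in> mor C"
  shows "bij_betw (LamM f) (Aset A s (tgt C f)) (Aset A s (src C f))"
    and "set_mset (PhiM f) \<subseteq> Aset A s (src C f)"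
proof -
  have r: "valid (rep f)" "src C f = fst (rep f)" "tgt C f = Lq.pt (fst (rep f)) (rw f)"
    using rep_mor[OF assms] by auto
  have v: "Lq.vp (fst (rep f)) (rw f)" using r(1) valid_iff rw_def by simp
  show "bij_betw (LamM f) (Aset A s (tgt C f)) (Aset A s (src C f))"
    using Lq.lam_bij[OF v] r by (simp add: LamM_def)
  show "set_mset (PhiM f) \<subseteq> Aset A s (src C f)"
    using Lq.phi_sub[OF v] r by (simp add: PhiM_def)
qed

lemma act_inv1:
  assumes f: "f \<in> mor C" and n: "n \<in> D (src C f)"
  shows "actp f (actn f n) = n"
proof
  fix a
  note bij = mor_facts(1)[OF f]
  show "actp f (actn f n) a = n a"
  proof (cases "a \<in> Aset A s (src C f)")
    case True
    define b where "b = inv_into (Aset A s (tgt C f)) (LamM f) a"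
    have b: "b \<in> Aset A s (tgt C f)" "LamM f b = a"
      using True bij b_def bij_betw_inv_into_right bij_betw_inv_into bij_betwE by metis+
    show ?thesis using True b by (simp add: actp_def actn_def b_def[symmetric])
  next
    case False then show ?thesis using n by (simp add: actp_def D_def)
  qed
qed

lemma act_inv2:
  assumes f: "f \<in> mor C" and n: "n \<in> D (tgt C f)"
  shows "actn f (actp f n) = n"
proof
  fix b
  note bij = mor_facts(1)[OF f]
  show "actn f (actp f n) b = n b"
  proof (cases "b \<in> Aset A s (tgt C f)")
    case True
    have "LamM f b \<in> Aset A s (src C f)" using True bij bij_betwE by blast
    moreover have "inv_into (Aset A s (tgt C f)) (LamM f) (LamM f b) = b"
      using True bij bij_betw_def inv_into_f_f by metis
    ultimately show ?thesis using True by (simp add: actp_def actn_def)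
  next
    case False then show ?thesis using n by (simp add: actn_def D_def)
  qed
qed

lemma act_id:
  assumes y: "y \<in> Lam" and n: "n \<in> D y"
  shows "actp (idm C y) n = n"
proof -
  have v: "valid (y, [])" using y by (simp add: valid_iff)
  have r: "valid (rep (cls (y, []))) \<and> fst (rep (cls (y, []))) = y \<and> Lq.E [] (snd (rep (cls (y, []))))"
    using rep_cls[OF v] by simp
  then have "snd (rep (cls (y, []))) = []" using Lq.E_vp[of "[]" _ y] by auto
  then have pl: "PhiM (idm C y) = {#}" "LamM (idm C y) = id" by (simp_all add: PhiM_def LamM_def rw_def idm_C)
  have st: "src C (idm C y) = y" "tgt C (idm C y) = y" using idm_mor[OF y] by auto
  have ii: "inv_into (Aset A s y) id a = a" if "a \<in> Aset A s y" for a
    using that by (metis id_apply inj_on_id inv_into_f_f)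
  show ?thesis
  proof
    fix a show "actp (idm C y) n a = n a"
      using n pl st ii by (auto simp: actp_def D_def)
  qed
qed

lemma act_comp:
  assumes f: "f \<in> mor C" and g: "g \<in> mor C" and fg: "tgt C f = src C g" and n: "n \<in> D (tgt C g)"
  shows "actp f (actp g n) = actp (cmp C f g) n"
proof -
  obtain pf pg where pf: "pf = rep f" and pg: "pg = rep g" by blast
  have rf: "valid pf" "cls pf = f" "src C f = fst pf" "tgt C f = Lq.pt (fst pf) (snd pf)"
    using rep_mor[OF f] pf rw_def by auto
  have rg: "valid pg" "cls pg = g" "src C g = fst pg" "tgt C g = Lq.pt (fst pg) (snd pg)"
    using rep_mor[OF g] pg rw_def by auto
  have pq: "Lq.pt (fst pf) (snd pf) = fst pg" using rf rg fg by simp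
  have c: "cmp C f g = cls (fst pf, snd pf @ snd pg)" using cmp_cls[OF rf(1) rg(1) pq] rf rg by simp
  have v3: "valid (fst pf, snd pf @ snd pg)" using valid_app[OF rf(1) rg(1) pq] .
  have r3: "Lq.E (snd pf @ snd pg) (rw (cmp C f g))"
    using rep_cls[OF v3] c by (simp add: rw_def)
  have mc: "cmp C f g \<in> mor C" "src C (cmp C f g) = src C f" "tgt C (cmp C f g) = tgt C g"
    using cmp_C[OF f g fg] by auto
  define X where "X = Aset A s (src C f)"
  define Y where "Y = Aset A s (tgt C f)"
  define Z where "Z = Aset A s (tgt C g)"
  have bf: "bij_betw (LamM f) Y X" using mor_facts(1)[OF f] X_def Y_def by simp
  have bg: "bij_betw (LamM g) Z Y" using mor_facts(1)[OF g] fg Y_def Z_def by simp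
  have b3: "bij_betw (LamM (cmp C f g)) Z X" using mor_facts(1)[OF mc(1)] mc X_def Z_def by simp
  have sg: "set_mset (PhiM g) \<subseteq> Y" using mor_facts(2)[OF g] fg Y_def by simp
  have vp3: "Lq.vp (fst pf) (snd pf @ snd pg)" using v3 valid_iff by simp
  have pt3: "Lq.pt (fst pf) (snd pf @ snd pg) = tgt C g" using rg pq by (simp add: Lq.pt_append)
  have phi3: "PhiM (cmp C f g) = PhiM f + image_mset (LamM f) (PhiM g)"
    using Lq.phi_E[OF r3] pf pg by (simp add: PhiM_def LamM_def rw_def Lq.phi_append)
  have lam3: "LamM (cmp C f g) c = LamM f (LamM g c)" if "c \<in> Z" for c
    using Lq.lam_E[OF r3 vp3, of c] that pt3 pf pg by (simp add: LamM_def rw_def Z_def Lq.lam_append)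
  show ?thesis
  proof
    fix a
    show "actp f (actp g n) a = actp (cmp C f g) n a"
    proof (cases "a \<in> X")
      case True
      define b where "b = inv_into Y (LamM f) a"
      have b: "b \<in> Y" "LamM f b = a"
        using True bf b_def bij_betw_inv_into_right bij_betw_inv_into bij_betwE by metis+
      define c where "c = inv_into Z (LamM g) b"
      have c: "c \<in> Z" "LamM g c = b"
        using b bg c_def bij_betw_inv_into_right bij_betw_inv_into bij_betwE by metis+
      have inj3: "inj_on (LamM (cmp C f g)) Z" using b3 bij_betw_def by blast
      have i3: "inv_into Z (LamM (cmp C f g)) a = c"
        using inv_into_f_eq[OF inj3 c(1)] lam3[OF c(1)] c b by simp
      have cnt: "count (image_mset (LamM f) (PhiM g)) a = count (PhiM g) b"
        using count_image_mset_inj_on[of "LamM f" Y "PhiM g" b] bf sg b by (simp add: bij_betw_def)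
      have bY: "b \<in> Aset A s (src C g)" using b fg Y_def by simp
      show ?thesis using True mc i3 cnt phi3 bY
        by (simp add: actp_def X_def[symmetric] Y_def[symmetric] Z_def[symmetric] b_def[symmetric] c_def[symmetric])
    next
      case False then show ?thesis using mc by (simp add: actp_def X_def)
    qed
  qed
qed

lemma env_step_inv:
  assumes "env_step C p q"
  shows "env_walk C (fst p) (snd p) \<and> env_walk C (fst q) (snd q) \<and> fst q = fst p \<and>
    wend C (fst q) (snd q) = wend C (fst p) (snd p) \<and>
    (\<forall>n \<in> D (wend C (fst p) (snd p)). run (snd p) n = run (snd q) n)"
  using assms
proof (cases rule: env_step.cases)
  case (comp x u f g v)
  from comp(3) have w: "env_walk C x u" "f \<in> mor C" "src C f = wend C x u" "g \<in> mor C"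
    "tgt C f = src C g" "env_walk C (tgt C g) v"
    by (auto simp: env_walk_append letter_src_def letter_tgt_def)
  have mc: "tgt C (cmp C f g) = tgt C g" using cmp_C[OF w(2,4,5)] by simp
  have "run [(f, True), (g, True)] m = run [(cmp C f g, True)] m" if "m \<in> D (tgt C g)" for m
    using act_comp[OF w(2,4,5) that] by (simp add: act_def)
  moreover have "run v n \<in> D (tgt C g)" if "n \<in> D (wend C (tgt C g) v)" for n
    using run_D[OF w(6) that] .
  ultimately show ?thesis using comp mc
    by (simp add: wend_append run_append letter_tgt_def w(3)[symmetric])
next
  case (inv1 x u f v)
  from inv1(3) have w: "env_walk C x u" "f \<in> mor C" "src C f = wend C x u" "env_walk C (src C f) v"
    by (auto simp: env_walk_append letter_src_def letter_tgt_def)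
  have "run [(f, True), (f, False)] m = m" if "m \<in> D (src C f)" for m
    using act_inv1[OF w(2) that] by (simp add: act_def)
  moreover have "run v n \<in> D (src C f)" if "n \<in> D (wend C (src C f) v)" for n
    using run_D[OF w(4) that] .
  ultimately show ?thesis using inv1
    by (simp add: wend_append run_append letter_tgt_def w(3)[symmetric])
next
  case (inv2 x u f v)
  from inv2(3) have w: "env_walk C x u" "f \<in> mor C" "tgt C f = wend C x u" "env_walk C (tgt C f) v"
    by (auto simp: env_walk_append letter_src_def letter_tgt_def)
  have "run [(f, False), (f, True)] m = m" if "m \<in> D (tgt C f)" for m
    using act_inv2[OF w(2) that] by (simp add: act_def)
  moreover have "run v n \<in> D (tgt C f)" if "n \<in> D (wend C (tgt C f) v)" for n
    using run_D[OF w(4) that] .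
  ultimately show ?thesis using inv2
    by (simp add: wend_append run_append letter_tgt_def w(3)[symmetric])
next
  case (ident x u y v)
  from ident(3) have w: "env_walk C x u" "idm C y \<in> mor C" "src C (idm C y) = wend C x u"
    "env_walk C (tgt C (idm C y)) v"
    by (auto simp: env_walk_append letter_src_def letter_tgt_def)
  have yL: "y \<in> Lam"
  proof -
    obtain p where p: "valid p" "idm C y = cls p" using w(2) morE by metis
    have "(y, []) \<in> cls (y, [])" by (simp add: sc_class_def sc_eq_def)
    then have "(y, []) \<in> cls p" using p idm_C by simp
    then show ?thesis using cls_iff[OF p(1)] valid_iff by auto
  qed
  have st: "src C (idm C y) = y" "tgt C (idm C y) = y" using idm_mor[OF yL] by auto
  have "run [(idm C y, True)] m = m" if "m \<in> D y" for m
    using act_id[OF yL that] by (simp add: act_def)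
  moreover have "run v n \<in> D y" if "n \<in> D (wend C y v)" for n
    using run_D[of y v n] w(4) that st by simp
  ultimately show ?thesis using ident st
    by (simp add: wend_append run_append letter_tgt_def w(3)[symmetric])
qed

lemma env_eq_inv:
  assumes "env_eq C p q" "env_walk C (fst p) (snd p)"
  shows "env_walk C (fst q) (snd q) \<and> fst q = fst p \<and>
    wend C (fst q) (snd q) = wend C (fst p) (snd p) \<and>
    (\<forall>n \<in> D (wend C (fst p) (snd p)). run (snd p) n = run (snd q) n)"
  using assms(1) unfolding env_eq_def
proof (induction rule: rtranclp_induct)
  case base then show ?case using assms(2) by simp
next
  case (step y z)
  from step(2) have "env_walk C (fst z) (snd z) \<and> fst z = fst y \<and>
    wend C (fst z) (snd z) = wend C (fst y) (snd y) \<and>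
    (\<forall>n \<in> D (wend C (fst y) (snd y)). run (snd y) n = run (snd z) n)"
  proof
    assume "env_step C y z" then show ?thesis using env_step_inv by blast
  next
    assume "env_step C z y" then show ?thesis using env_step_inv by (metis (no_types, lifting))
  qed
  then show ?case using step(3) by auto
qed

lemma inj_iota: "inj_on (env_iota C) (mor C)"
proof (rule inj_onI)
  fix f g assume f: "f \<in> mor C" and g: "g \<in> mor C" and eq: "env_iota C f = env_iota C g"
  have "(src C g, [(g, True)]) \<in> env_class C (src C g, [(g, True)])"
    by (simp add: env_class_def env_eq_def)
  then have e: "env_eq C (src C f, [(f, True)]) (src C g, [(g, True)])"
    using eq unfolding env_iota_def env_class_def by blast
  have wf: "env_walk C (src C f) [(f, True)]"
    using f src_tgt_Lam by (simp add: letter_src_def letter_tgt_def ob_C)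
  have inv: "src C g = src C f" "tgt C g = tgt C f"
    "\<forall>n \<in> D (tgt C f). act (f, True) n = act (g, True) n"
    using env_eq_inv[OF e] wf by (simp_all add: letter_tgt_def)
  have "(\<lambda>_. 0::int) \<in> D (tgt C f)" by (simp add: D_def)
  then have z: "actp f (\<lambda>_. 0) = actp g (\<lambda>_. 0)" using inv(3) by (simp add: act_def)
  have "PhiM f = PhiM g"
  proof (rule multiset_eqI)
    fix a
    show "count (PhiM f) a = count (PhiM g) a"
    proof (cases "a \<in> Aset A s (src C f)")
      case True
      then show ?thesis using fun_cong[OF z, of a] inv by (simp add: actp_def)
    next
      case False
      then have "a \<notin># PhiM f" "a \<notin># PhiM g" using mor_facts(2)[OF f] mor_facts(2)[OF g] inv by auto
      then show ?thesis by (simp add: not_in_iff)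
    qed
  qed
  moreover have rf: "valid (rep f)" "cls (rep f) = f" "src C f = fst (rep f)"
    using rep_mor[OF f] by auto
  moreover have rg: "valid (rep g)" "cls (rep g) = g" "src C g = fst (rep g)"
    using rep_mor[OF g] by auto
  ultimately have "Lq.E (rw f) (rw g)"
    using Lq.phi_inj[of "fst (rep f)" "rw f" "rw g"] inv valid_iff by (simp add: PhiM_def rw_def)
  then show "f = g" using cls_eq_iff[OF rf(1) rg(1)] rf rg inv by (simp add: rw_def)
qed

end

context yb
begin

lemma cl_Cons: "composable_list C (f # xs) \<longleftrightarrow> f \<in> mor C \<and> composable_list C xs \<and> (xs \<noteq> [] \<longrightarrow> tgt C f = src C (hd xs))"
  by (cases xs) auto

lemma cl_hd_mor: "composable_list C xs \<Longrightarrow> xs \<noteq> [] \<Longrightarrow> hd xs \<in> mor C"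
  by (cases xs) (auto simp: cl_Cons)

lemma prod_Cons: "xs \<noteq> [] \<Longrightarrow> prod_list_cat C (f # xs) = cmp C f (prod_list_cat C xs)"
  by (cases xs) auto

lemma cl_prod: "composable_list C xs \<Longrightarrow> xs \<noteq> [] \<Longrightarrow>
  prod_list_cat C xs \<in> mor C \<and> src C (prod_list_cat C xs) = src C (hd xs) \<and> tgt C (prod_list_cat C xs) = tgt C (last xs)"
proof (induction xs)
  case (Cons f xs)
  show ?case
  proof (cases "xs = []")
    case True then show ?thesis using Cons by auto
  next
    case False
    then show ?thesis using Cons cmp_C[of f "prod_list_cat C xs"] by (auto simp: cl_Cons prod_Cons)
  qed
qed simp

lemma ld_hd_prod: "composable_list C xs \<Longrightarrow> xs \<noteq> [] \<Longrightarrow> left_divides C (hd xs) (prod_list_cat C xs)"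
proof (cases xs)
  case (Cons f ys)
  assume cl: "composable_list C xs"
  then have f: "f \<in> mor C" using Cons by (simp add: cl_Cons)
  show ?thesis
  proof (cases "ys = []")
    case True
    then show ?thesis using Cons idm_right[OF f] idm_mor[of "tgt C f"] src_tgt_Lam[OF f] f
      unfolding left_divides_def by (metis list.sel(1) prod_list_cat.simps(2))
  next
    case False
    have c: "tgt C f = src C (hd ys)" "composable_list C ys" using cl Cons False by (auto simp: cl_Cons)
    moreover have "prod_list_cat C ys \<in> mor C \<and> src C (prod_list_cat C ys) = src C (hd ys)"
      using cl_prod[OF c(2) False] by simp
    moreover have "prod_list_cat C xs \<in> mor C" using cl_prod[OF cl] Cons by simp
    ultimately show ?thesis using Cons f False unfolding left_divides_def by (auto simp: prod_Cons)
  qed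
qed auto

lemma ld_mult:
  assumes "left_divides C a b" "h' \<in> mor C" "tgt C h' = src C a"
  shows "left_divides C (cmp C h' a) (cmp C h' b)"
proof -
  obtain r where r: "a \<in> mor C" "b \<in> mor C" "r \<in> mor C" "src C r = tgt C a" "cmp C a r = b"
    using assms(1) unfolding left_divides_def by blast
  have "src C b = src C a" using cmp_C[OF r(1) r(3) r(4)[symmetric]] r by simp
  have "cmp C (cmp C h' a) r = cmp C h' b" using assoc_C[OF assms(2) r(1) r(3) assms(3) r(4)[symmetric]] r by simp
  moreover have "cmp C h' a \<in> mor C" "tgt C (cmp C h' a) = tgt C a" using cmp_C[OF assms(2) r(1) assms(3)] by auto
  moreover have "cmp C h' b \<in> mor C" using cmp_C[OF assms(2) r(2)] assms(3) \<open>src C b = src C a\<close> by simp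
  ultimately show ?thesis unfolding left_divides_def using r by auto
qed

lemma ld_trans:
  assumes "left_divides C h x" "left_divides C x y"
  shows "left_divides C h y"
proof -
  obtain a where a: "h \<in> mor C" "x \<in> mor C" "a \<in> mor C" "src C a = tgt C h" "cmp C h a = x"
    using assms(1) unfolding left_divides_def by blast
  obtain b where b: "y \<in> mor C" "b \<in> mor C" "src C b = tgt C x" "cmp C x b = y"
    using assms(2) unfolding left_divides_def by blast
  have ta: "tgt C x = tgt C a" using cmp_C[OF a(1) a(3) a(4)[symmetric]] a by simp
  have "cmp C h (cmp C a b) = y" using assoc_C[OF a(1) a(3) b(2) a(4)[symmetric]] ta b a by simp
  moreover have "cmp C a b \<in> mor C \<and> src C (cmp C a b) = src C a" using cmp_C[OF a(3) b(2)] ta b by simp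
  ultimately show ?thesis unfolding left_divides_def using a b by auto
qed

lemma lcm_disjoint:
  assumes lcm: "is_left_lcm C f g H" and f: "f \<in> mor C" and g: "g \<in> mor C"
    and u: "u \<in> mor C" "tgt C u = src C f" "cmp C u f = H"
    and v: "v \<in> mor C" "tgt C v = src C g" "cmp C v g = H"
  shows "left_disjoint C u v"
proof -
  have Hu: "H \<in> mor C" "src C H = src C u" "tgt C H = tgt C f" using cmp_C[OF u(1) f u(2)] u(3) by auto
  have Hv: "src C H = src C v" "tgt C H = tgt C g" using cmp_C[OF v(1) g v(2)] v(3) by auto
  have "\<forall>h\<in>mor C. \<forall>h'\<in>mor C. tgt C h' = src C u \<longrightarrow>
        left_divides C h (cmp C h' u) \<longrightarrow> left_divides C h (cmp C h' v) \<longrightarrow> left_divides C h h'"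
  proof (intro ballI impI)
    fix h h' assume h: "h \<in> mor C" "h' \<in> mor C" "tgt C h' = src C u"
      and d1: "left_divides C h (cmp C h' u)" and d2: "left_divides C h (cmp C h' v)"
    have h'v: "tgt C h' = src C v" using h Hu Hv by simp
    obtain a where a: "a \<in> mor C" "src C a = tgt C h" "cmp C h a = cmp C h' u"
      using d1 unfolding left_divides_def by blast
    obtain b where b: "b \<in> mor C" "src C b = tgt C h" "cmp C h b = cmp C h' v"
      using d2 unfolding left_divides_def by blast
    have ta: "tgt C a = src C f"
      using cmp_C[OF h(1) a(1) a(2)[symmetric]] cmp_C[OF h(2) u(1) h(3)] a u by simp
    have tb: "tgt C b = src C g"
      using cmp_C[OF h(1) b(1) b(2)[symmetric]] cmp_C[OF h(2) v(1) h'v] b v by simp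
    have af: "cmp C a f \<in> mor C" "src C (cmp C a f) = tgt C h" using cmp_C[OF a(1) f ta] a by auto
    have bg: "cmp C b g \<in> mor C" "src C (cmp C b g) = tgt C h" using cmp_C[OF b(1) g tb] b by auto
    have "cmp C h (cmp C a f) = cmp C (cmp C h a) f" using assoc_C[OF h(1) a(1) f a(2)[symmetric] ta] by simp
    also have "\<dots> = cmp C h' H" using a(3) assoc_C[OF h(2) u(1) f h(3) u(2)] u(3) by simp
    also have "\<dots> = cmp C (cmp C h b) g" using b(3) assoc_C[OF h(2) v(1) g h'v v(2)] v(3) by simp
    also have "\<dots> = cmp C h (cmp C b g)" using assoc_C[OF h(1) b(1) g b(2)[symmetric] tb] by simp
    finally have "cmp C a f = cmp C b g"
      using lcancel_C h(1) af bg unfolding left_cancellative_def by metis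
    then have "right_divides C f (cmp C a f)" "right_divides C g (cmp C a f)"
      unfolding right_divides_def using a b f g af ta tb by auto
    then have "right_divides C H (cmp C a f)" using lcm af unfolding is_left_lcm_def by blast
    then obtain w where w: "w \<in> mor C" "tgt C w = src C H" "cmp C w H = cmp C a f"
      unfolding right_divides_def by blast
    have wu: "cmp C w u \<in> mor C" "tgt C (cmp C w u) = src C f" "src C (cmp C w u) = src C w"
      using cmp_C[OF w(1) u(1)] w(2) Hu u by auto
    have "cmp C (cmp C w u) f = cmp C a f" using assoc_C[OF w(1) u(1) f] w Hu u by simp
    then have wua: "cmp C w u = a"
      using rcancel_C wu a(1) f ta unfolding right_cancellative_def by metis
    have sw: "src C w = tgt C h" using wu(3) wua a(2) by simp
    have hw: "cmp C h w \<in> mor C" "tgt C (cmp C h w) = src C u" using cmp_C[OF h(1) w(1) sw[symmetric]] w Hu by auto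
    have "cmp C (cmp C h w) u = cmp C h' u"
      using assoc_C[OF h(1) w(1) u(1) sw[symmetric]] w Hu wua a(3) by simp
    then have "cmp C h w = h'" using rcancel_C hw h u(1) unfolding right_cancellative_def by metis
    then show "left_divides C h h'" unfolding left_divides_def using h w sw by auto
  qed
  then show ?thesis unfolding left_disjoint_def using u v Hu Hv by auto
qed

end

lemma env_eq_refl: "env_eq C p p" by (simp add: env_eq_def)
lemma env_eq_sym: "env_eq C p q \<Longrightarrow> env_eq C q p"
  unfolding env_eq_def by (rule rtranclp_sym) auto
lemma env_eq_trans: "env_eq C p q \<Longrightarrow> env_eq C q r \<Longrightarrow> env_eq C p r"
  unfolding env_eq_def by (rule rtranclp_trans)
lemma step_eq: "env_step C p q \<Longrightarrow> env_eq C p q"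
  unfolding env_eq_def by auto
lemma step_eq_rev: "env_step C p q \<Longrightarrow> env_eq C q p"
  unfolding env_eq_def by auto
lemma env_class_eq: "env_eq C p q \<Longrightarrow> env_class C p = env_class C q"
  unfolding env_class_def using env_eq_sym env_eq_trans by blast

context yb
begin

lemma walk_pos: "composable_list C xs \<Longrightarrow> xs \<noteq> [] \<Longrightarrow>
  env_walk C y (map (\<lambda>t. (t, True)) xs @ post) \<longleftrightarrow> y = src C (hd xs) \<and> env_walk C (tgt C (last xs)) post"
proof (induction xs arbitrary: y)
  case (Cons f xs)
  show ?case
  proof (cases "xs = []")
    case True then show ?thesis using Cons by (auto simp: letter_src_def letter_tgt_def)
  next
    case False
    then show ?thesis using Cons by (auto simp: letter_src_def letter_tgt_def cl_Cons)
  qed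
qed simp

lemma walk_neg: "composable_list C xs \<Longrightarrow> xs \<noteq> [] \<Longrightarrow>
  env_walk C y (map (\<lambda>t. (t, False)) (rev xs) @ post) \<longleftrightarrow> y = tgt C (last xs) \<and> env_walk C (src C (hd xs)) post"
proof (induction xs arbitrary: post)
  case (Cons f xs)
  show ?case
  proof (cases "xs = []")
    case True then show ?thesis using Cons by (auto simp: letter_src_def letter_tgt_def)
  next
    case False
    have cl: "composable_list C xs" "f \<in> mor C" "tgt C f = src C (hd xs)" using Cons False by (auto simp: cl_Cons)
    have "env_walk C y (map (\<lambda>t. (t, False)) (rev (f # xs)) @ post) =
          env_walk C y (map (\<lambda>t. (t, False)) (rev xs) @ ((f, False) # post))" by simp
    also have "\<dots> \<longleftrightarrow> y = tgt C (last xs) \<and> env_walk C (src C (hd xs)) ((f, False) # post)"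
      using Cons.IH[OF cl(1) False] .
    finally show ?thesis using cl False by (auto simp: letter_src_def letter_tgt_def)
  qed
qed simp

lemma expand:
  assumes "composable_list C xs" "xs \<noteq> []" "env_walk C x (pre @ [(prod_list_cat C xs, True)] @ post)"
  shows "env_eq C (x, pre @ map (\<lambda>t. (t, True)) xs @ post) (x, pre @ [(prod_list_cat C xs, True)] @ post)"
  using assms
proof (induction xs arbitrary: pre)
  case (Cons f xs)
  show ?case
  proof (cases "xs = []")
    case True then show ?thesis by (simp add: env_eq_refl)
  next
    case False
    define P where "P = prod_list_cat C xs"
    have cl: "composable_list C xs" "f \<in> mor C" "tgt C f = src C (hd xs)" using Cons False by (auto simp: cl_Cons)
    have Pm: "P \<in> mor C" "src C P = tgt C f" "tgt C P = tgt C (last xs)" using cl_prod[OF cl(1) False] cl P_def by auto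
    have fP: "src C (cmp C f P) = src C f" "tgt C (cmp C f P) = tgt C P" using cmp_C[OF cl(2) Pm(1)] Pm by auto
    have pc: "prod_list_cat C (f # xs) = cmp C f P" using False P_def by (simp add: prod_Cons)
    from Cons.prems(3) have w0: "env_walk C x pre" "src C f = wend C x pre" "env_walk C (tgt C P) post"
      using pc fP by (auto simp: env_walk_append letter_src_def letter_tgt_def)
    have w1: "env_walk C x (pre @ [(f, True), (P, True)] @ post)"
      using w0 cl Pm by (simp add: env_walk_append letter_src_def letter_tgt_def)
    have s1: "env_step C (x, pre @ [(f, True), (P, True)] @ post) (x, pre @ [(cmp C f P, True)] @ post)"
      using w1 Cons.prems(3) pc by (intro env_step.comp) auto
    have w1': "env_walk C x ((pre @ [(f, True)]) @ [(P, True)] @ post)" using w1 by simp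
    have "env_eq C (x, (pre @ [(f, True)]) @ map (\<lambda>t. (t, True)) xs @ post) (x, (pre @ [(f, True)]) @ [(P, True)] @ post)"
      using Cons.IH[OF cl(1) False] w1' P_def by blast
    then show ?thesis using step_eq[OF s1] pc env_eq_trans by fastforce
  qed
qed simp

lemma cancel_walk:
  assumes "composable_list C xs" "xs \<noteq> []" "env_walk C x (pre @ post)" "wend C x pre = tgt C (last xs)"
  shows "env_eq C (x, pre @ map (\<lambda>t. (t, False)) (rev xs) @ map (\<lambda>t. (t, True)) xs @ post) (x, pre @ post)"
  using assms
proof (induction xs)
  case (Cons f r)
  have f: "f \<in> mor C" using Cons by (simp add: cl_Cons)
  have wp: "env_walk C x pre" "env_walk C (wend C x pre) post" using Cons.prems(3) by (auto simp: env_walk_append)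
  have a: "env_walk C (src C (hd (f # r))) (map (\<lambda>t. (t, True)) (f # r) @ post)"
    by (rule walk_pos[OF Cons.prems(1,2), THEN iffD2]) (use wp Cons.prems(4) in simp)
  have b: "env_walk C (wend C x pre) (map (\<lambda>t. (t, False)) (rev (f # r)) @ (map (\<lambda>t. (t, True)) (f # r) @ post))"
    by (rule walk_neg[OF Cons.prems(1,2), THEN iffD2]) (use a Cons.prems(4) in simp)
  have wl: "env_walk C x (pre @ map (\<lambda>t. (t, False)) (rev (f # r)) @ map (\<lambda>t. (t, True)) (f # r) @ post)"
    using env_walk_append[THEN iffD2, OF conjI[OF wp(1) b]] .
  show ?case
  proof (cases "r = []")
    case True
    have "env_step C (x, pre @ [(f, False), (f, True)] @ post) (x, pre @ post)"
      using wl True Cons.prems(3) by (intro env_step.inv2) auto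
    then show ?thesis using True step_eq by fastforce
  next
    case False
    have cl: "composable_list C r" using Cons by (simp add: cl_Cons)
    have a: "env_walk C (src C (hd r)) (map (\<lambda>t. (t, True)) r @ post)"
      by (rule walk_pos[OF cl False, THEN iffD2]) (use wp Cons.prems(4) False in simp)
    have b: "env_walk C (wend C x pre) (map (\<lambda>t. (t, False)) (rev r) @ (map (\<lambda>t. (t, True)) r @ post))"
      by (rule walk_neg[OF cl False, THEN iffD2]) (use a Cons.prems(4) False in simp)
    have wr: "env_walk C x (pre @ map (\<lambda>t. (t, False)) (rev r) @ map (\<lambda>t. (t, True)) r @ post)"
      using env_walk_append[THEN iffD2, OF conjI[OF wp(1) b]] .
    have "env_step C (x, (pre @ map (\<lambda>t. (t, False)) (rev r)) @ [(f, False), (f, True)] @ (map (\<lambda>t. (t, True)) r @ post))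
        (x, (pre @ map (\<lambda>t. (t, False)) (rev r)) @ (map (\<lambda>t. (t, True)) r @ post))"
      using wl wr by (intro env_step.inv2) auto
    then have "env_eq C (x, pre @ map (\<lambda>t. (t, False)) (rev (f # r)) @ map (\<lambda>t. (t, True)) (f # r) @ post)
        (x, pre @ map (\<lambda>t. (t, False)) (rev r) @ map (\<lambda>t. (t, True)) r @ post)"
      using step_eq by fastforce
    moreover have "env_eq C (x, pre @ map (\<lambda>t. (t, False)) (rev r) @ map (\<lambda>t. (t, True)) r @ post) (x, pre @ post)"
      using Cons.IH[OF cl False Cons.prems(3)] Cons.prems(4) False by simp
    ultimately show ?thesis using env_eq_trans by blast
  qed
qed simp

end

context yb
begin

lemma sym_decomp:
  assumes S: "garside_family C S" and f: "f \<in> mor C" and g: "g \<in> mor C" and fg: "tgt C f = tgt C g"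
  shows "has_sym_normal_decomp C S (env_class C (src C f, [(f, True), (g, False)]))"
proof -
  obtain H where lcm: "is_left_lcm C f g H" using lcm_C[OF f g fg] by blast
  then obtain u v where u: "u \<in> mor C" "tgt C u = src C f" "cmp C u f = H"
    and v: "v \<in> mor C" "tgt C v = src C g" "cmp C v g = H"
    unfolding is_left_lcm_def right_divides_def by blast
  have ld: "left_disjoint C u v" using lcm_disjoint[OF lcm f g u v] .
  have Hm: "H \<in> mor C" using cmp_C[OF u(1) f u(2)] u by simp
  obtain ts where ts: "normal_path C S ts" "prod_list_cat C ts = u" using S u unfolding garside_family_def by blast
  obtain ss where ss: "normal_path C S ss" "prod_list_cat C ss = v" using S v unfolding garside_family_def by blast
  have tsc: "composable_list C ts" "ts \<noteq> []" using ts unfolding normal_path_def by auto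
  have ssc: "composable_list C ss" "ss \<noteq> []" using ss unfolding normal_path_def by auto
  have pu: "src C u = src C (hd ts)" "tgt C u = tgt C (last ts)" using cl_prod[OF tsc] ts by auto
  have pv: "src C v = src C (hd ss)" "tgt C v = tgt C (last ss)" using cl_prod[OF ssc] ss by auto
  have suv: "src C u = src C v" using ld unfolding left_disjoint_def by blast
  have ldt: "left_divides C (hd ts) u" using ld_hd_prod[OF tsc] ts by simp
  have lds: "left_divides C (hd ss) v" using ld_hd_prod[OF ssc] ss by simp
  have disj: "left_disjoint C (hd ts) (hd ss)"
    unfolding left_disjoint_def
  proof (intro conjI ballI impI)
    show "hd ts \<in> mor C" "hd ss \<in> mor C" using cl_hd_mor tsc ssc by auto
    show "src C (hd ts) = src C (hd ss)" using pu pv suv by simp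
  next
    fix h h' assume h: "h \<in> mor C" "h' \<in> mor C" "tgt C h' = src C (hd ts)"
      and d1: "left_divides C h (cmp C h' (hd ts))" and d2: "left_divides C h (cmp C h' (hd ss))"
    have "left_divides C h (cmp C h' u)" using ld_trans[OF d1 ld_mult[OF ldt h(2) h(3)]] .
    moreover have "left_divides C h (cmp C h' v)"
      using ld_trans[OF d2 ld_mult[OF lds h(2)]] h(3) pu pv suv by simp
    ultimately show "left_divides C h h'" using ld h pu unfolding left_disjoint_def by auto
  qed
  define x where "x = src C f"
  define N where "N = map (\<lambda>t. (t, False)) (rev ts)"
  have tx: "tgt C (last ts) = x" using pu u x_def by simp
  have xL: "x \<in> Lam" using src_tgt_Lam[OF f] x_def by simp
  have fm: "tgt C f \<in> Lam" "src C g \<in> Lam" "tgt C v \<in> Lam" using src_tgt_Lam f g v(1) by auto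
  have wN: "env_walk C x (N @ post) \<longleftrightarrow> env_walk C (src C u) post" for post
    using walk_neg[OF tsc, of x post] tx pu by (simp add: N_def)
  have e1: "env_eq C (x, N @ map (\<lambda>t. (t, True)) ss) (x, N @ [(v, True)])"
  proof -
    have "env_walk C x (N @ [(prod_list_cat C ss, True)] @ [])"
      using wN ss v suv fm by (simp add: letter_src_def letter_tgt_def ob_C)
    from expand[OF ssc this] show ?thesis using ss by simp
  qed
  have e2: "env_eq C (x, N @ [(v, True)]) (x, N @ [(v, True), (g, True), (g, False)])"
  proof -
    have "env_step C (x, (N @ [(v, True)]) @ [(g, True), (g, False)] @ []) (x, (N @ [(v, True)]) @ [])"
      using wN v g suv fm by (intro env_step.inv1) (simp_all add: letter_src_def letter_tgt_def ob_C)
    then show ?thesis using step_eq_rev by fastforce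
  qed
  have e3: "env_eq C (x, N @ [(v, True), (g, True), (g, False)]) (x, N @ [(H, True), (g, False)])"
  proof -
    have "env_step C (x, N @ [(v, True), (g, True)] @ [(g, False)]) (x, N @ [(cmp C v g, True)] @ [(g, False)])"
      using wN v g suv fm Hm cmp_C[OF v(1) g v(2)] by (intro env_step.comp) (simp_all add: letter_src_def letter_tgt_def ob_C)
    then show ?thesis using step_eq v by fastforce
  qed
  have e4: "env_eq C (x, N @ [(H, True), (g, False)]) (x, N @ [(u, True), (f, True), (g, False)])"
  proof -
    have "env_step C (x, N @ [(u, True), (f, True)] @ [(g, False)]) (x, N @ [(cmp C u f, True)] @ [(g, False)])"
      using wN u f g fg fm Hm cmp_C[OF u(1) f u(2)] by (intro env_step.comp) (simp_all add: letter_src_def letter_tgt_def ob_C)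
    then show ?thesis using step_eq_rev u by fastforce
  qed
  have e5: "env_eq C (x, N @ [(u, True), (f, True), (g, False)]) (x, N @ map (\<lambda>t. (t, True)) ts @ [(f, True), (g, False)])"
  proof -
    have "env_walk C x (N @ [(prod_list_cat C ts, True)] @ [(f, True), (g, False)])"
      using wN u f g fg fm ts by (simp add: letter_src_def letter_tgt_def ob_C)
    from env_eq_sym[OF expand[OF tsc this]] show ?thesis using ts by simp
  qed
  have e6: "env_eq C (x, N @ map (\<lambda>t. (t, True)) ts @ [(f, True), (g, False)]) (x, [(f, True), (g, False)])"
  proof -
    have "env_walk C x ([] @ [(f, True), (g, False)])"
      using f g fg fm x_def by (simp add: letter_src_def letter_tgt_def ob_C)
    from cancel_walk[OF tsc this] show ?thesis using tx by (simp add: N_def)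
  qed
  have "env_eq C (x, N @ map (\<lambda>t. (t, True)) ss) (x, [(f, True), (g, False)])"
    by (rule env_eq_trans[OF e1 env_eq_trans[OF e2 env_eq_trans[OF e3 env_eq_trans[OF e4 env_eq_trans[OF e5 e6]]]]])
  then have "env_eq C (src C f, [(f, True), (g, False)]) (tgt C (last ts), N @ map (\<lambda>t. (t, True)) ss)"
    using tx x_def env_eq_sym by simp
  then have eqc: "env_class C (src C f, [(f, True), (g, False)]) = env_class C (tgt C (last ts), map (\<lambda>t. (t, False)) (rev ts) @ map (\<lambda>s. (s, True)) ss)"
    unfolding N_def by (rule env_class_eq)
  show ?thesis unfolding has_sym_normal_decomp_def
    by (rule exI[of _ ts], rule exI[of _ ss]) (use ts(1) ss(1) disj eqc in blast)
qed

end

theorem proposition5p8: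
  fixes Lam :: "'v set" and A :: "'a set" and s t :: "'a \<Rightarrow> 'v"
    and \<sigma> :: "'a \<times> 'a \<Rightarrow> 'a \<times> 'a"
  defines "C \<equiv> structure_category Lam A s t \<sigma>"
  assumes "yang_baxter_map Lam A s t \<sigma>"
    and "involutive_qmap A s t \<sigma>"
    and "nondegenerate A s t \<sigma>"
  shows "left_ore C
    \<and> (\<forall>f\<in>mor C. \<forall>g\<in>mor C. tgt C f = tgt C g \<longrightarrow> (\<exists>h. is_left_lcm C f g h))
    \<and> inj_on (env_iota C) (mor C)
    \<and> (\<forall>S. garside_family C S \<longrightarrow>
         (\<forall>f\<in>mor C. \<forall>g\<in>mor C. tgt C f = tgt C g \<longrightarrow>
            has_sym_normal_decomp C S (env_class C (src C f, [(f, True), (g, False)]))))"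
proof -
  interpret yb Lam A s t \<sigma> using assms(2-4) by unfold_locales
  show ?thesis unfolding C_def using ore_C lcm_C inj_iota sym_decomp by blast
qed

end
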